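(* Assume (A1) and (A2), and let $\sigma,\sigma'>0$, $\bar Z\in\mathcal{Z}^\sigma_\star$, with $\bar Z'$ and $\bar H'$ as defined in the context. If $\bar H\in\mathcal{C}(\bar Z)\setminus\mathcal{T}_{\mathcal{Z}^\sigma_\star}(\bar Z)$, then $$\bar H'\in\mathcal{C}(\bar Z')\setminus\mathcal{T}_{\mathcal{Z}^{\sigma'}_\star}(\bar Z').$$
   Context: Notation: $\mathbb{S}^n$ is the space of real symmetric $n\times n$ matrices with $\langle A,B\rangle=\mathrm{tr}(AB)$. $\Pi_+$, $\Pi_-$ are the orthogonal projections onto the PSD and NSD cones, and $F'(Z;H):=\lim_{t\downarrow0}(F(Z+tH)-F(Z))/t$ for $F\in\{\Pi_+,\Pi_-\}$. SDP data $C,A_1,\dots,A_m\in\mathbb{S}^n$, $b\in\mathbb{R}^m$ define $\mathcal{A}X:=(\langle A_i,X\rangle)_i$ and $\mathcal{A}^*y:=\sum_iy_iA_i$. A KKT point is $(X,y,S)$ with $\mathcal{A}X=b$, $\mathcal{A}^*y+S=C$, $X,S\succeq0$, $\langle X,S\rangle=0$. $\mathcal{X}_\star$, $\mathcal{S}_\star$ are the sets of $X$, resp. $S$, in KKT points. (A1) $\mathcal{A}$ is surjective. (A2) Some KKT point $(X_{sc},y_{sc},S_{sc})$ has $\mathrm{rank}X_{sc}+\mathrm{rank}S_{sc}=n$. Let $\mathcal{P}:=\mathcal{A}^*(\mathcal{A}\mathcal{A}^* )^{-1}\mathcal{A}$ and $\mathcal{P}^\perp:=\mathrm{Id}-\mathcal{P}$.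 For $\tau>0$ let $\mathcal{Z}^\tau_\star:=\{X-\tau S:X\in\mathcal{X}_\star,S\in\mathcal{S}_\star\}$, a closed convex set, and let $\mathcal{T}_{\mathcal{Z}^\tau_\star}(\cdot)$ be its tangent cone. For such $\bar Z$ let $\delta'(\bar Z;H):=-\mathcal{P}\Pi_+'(\bar Z;H)-\mathcal{P}^\perp\Pi_-'(\bar Z;H)$ and $\mathcal{C}(\bar Z):=\{H:\delta'(\bar Z;H)=0\}$. Given $\bar Z\in\mathcal{Z}^\sigma_\star$, let $\bar X:=\Pi_+(\bar Z)$ and $\bar S:=-\sigma^{-1}\Pi_-(\bar Z)$, and define $$\bar Z':=\bar X-\sigma'\bar S\in\mathcal{Z}^{\sigma'}_\star,\qquad \bar H':=\Pi_+'(\bar Z;\bar H)+\frac{\sigma'}{\sigma}\Pi_-'(\bar Z;\bar H).$$ *)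

theory Defs
  imports "HOL-Analysis.Analysis"
begin

text \<open>Real symmetric n x n matrices are modelled as elements of real^'n^'n
  satisfying transpose X = X; n = CARD('n).\<close>

definition symm :: "(real^'n^'n) set" where
  "symm = {X. transpose X = X}"

definition sinner :: "real^'n^'n \<Rightarrow> real^'n^'n \<Rightarrow> real" where
  "sinner A B = trace (A ** B)"

definition psd_cone :: "(real^'n^'n) set" where
  "psd_cone = {X \<in> symm. \<forall>v. 0 \<le> v \<bullet> (X *v v)}"

definition nsd_cone :: "(real^'n^'n) set" where
  "nsd_cone = {X \<in> symm. \<forall>v. v \<bullet> (X *v v) \<le> 0}"

definition proj_plus :: "real^'n^'n \<Rightarrow> real^'n^'n" where
  "proj_plus Z = closest_point psd_cone Z"

definition proj_minus :: "real^'n^'n \<Rightarrow> real^'n^'n" where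
  "proj_minus Z = closest_point nsd_cone Z"

definition dir_deriv :: "(real^'n^'n \<Rightarrow> real^'n^'n) \<Rightarrow> real^'n^'n \<Rightarrow> real^'n^'n \<Rightarrow> real^'n^'n" where
  "dir_deriv F Z H = Lim (at_right (0::real)) (\<lambda>t. (F (Z + t *\<^sub>R H) - F Z) /\<^sub>R t)"

definition Aop :: "('m::finite \<Rightarrow> real^'n^'n) \<Rightarrow> real^'n^'n \<Rightarrow> real^'m" where
  "Aop As X = (\<chi> i. sinner (As i) X)"

definition Aadj :: "('m::finite \<Rightarrow> real^'n^'n) \<Rightarrow> real^'m \<Rightarrow> real^'n^'n" where
  "Aadj As y = (\<Sum>i\<in>UNIV. (y $ i) *\<^sub>R As i)"

definition AAadj :: "('m::finite \<Rightarrow> real^'n^'n) \<Rightarrow> real^'m^'m" where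
  "AAadj As = (\<chi> i j. sinner (As i) (As j))"

definition Pop :: "('m::finite \<Rightarrow> real^'n^'n) \<Rightarrow> real^'n^'n \<Rightarrow> real^'n^'n" where
  "Pop As X = Aadj As (matrix_inv (AAadj As) *v Aop As X)"

definition Pperp :: "('m::finite \<Rightarrow> real^'n^'n) \<Rightarrow> real^'n^'n \<Rightarrow> real^'n^'n" where
  "Pperp As X = X - Pop As X"

definition KKT :: "('m::finite \<Rightarrow> real^'n^'n) \<Rightarrow> real^'m \<Rightarrow> real^'n^'n
    \<Rightarrow> real^'n^'n \<Rightarrow> real^'m \<Rightarrow> real^'n^'n \<Rightarrow> bool" where
  "KKT As b C X y S \<longleftrightarrow> X \<in> symm \<and> S \<in> symm \<and> Aop As X = b \<and> Aadj As y + S = C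
     \<and> X \<in> psd_cone \<and> S \<in> psd_cone \<and> sinner X S = 0"

definition Xstar :: "('m::finite \<Rightarrow> real^'n^'n) \<Rightarrow> real^'m \<Rightarrow> real^'n^'n \<Rightarrow> (real^'n^'n) set" where
  "Xstar As b C = {X. \<exists>y S. KKT As b C X y S}"

definition Sstar :: "('m::finite \<Rightarrow> real^'n^'n) \<Rightarrow> real^'m \<Rightarrow> real^'n^'n \<Rightarrow> (real^'n^'n) set" where
  "Sstar As b C = {S. \<exists>X y. KKT As b C X y S}"

definition Zstar :: "('m::finite \<Rightarrow> real^'n^'n) \<Rightarrow> real^'m \<Rightarrow> real^'n^'n \<Rightarrow> real \<Rightarrow> (real^'n^'n) set" where
  "Zstar As b C \<tau> = {X - \<tau> *\<^sub>R S | X S. X \<in> Xstar As b C \<and> S \<in> Sstar As b C}"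

definition tangent_cone :: "'a::real_normed_vector set \<Rightarrow> 'a \<Rightarrow> 'a set" where
  "tangent_cone K z = closure {t *\<^sub>R (k - z) | t k. 0 \<le> t \<and> k \<in> K}"

definition delta' :: "('m::finite \<Rightarrow> real^'n^'n) \<Rightarrow> real^'n^'n \<Rightarrow> real^'n^'n \<Rightarrow> real^'n^'n" where
  "delta' As Z H = - Pop As (dir_deriv proj_plus Z H) - Pperp As (dir_deriv proj_minus Z H)"

definition crit_cone :: "('m::finite \<Rightarrow> real^'n^'n) \<Rightarrow> real^'n^'n \<Rightarrow> (real^'n^'n) set" where
  "crit_cone As Z = {H \<in> symm. delta' As Z H = 0}"

end

theory Submission
  imports Defs
begin

lemma mm_add_r: "((A::real^'n^'m) + B) ** C = A ** C + B ** C"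
  by (simp add: matrix_matrix_mult_def vec_eq_iff sum.distrib algebra_simps)
lemma mm_diff_l: "(A::real^'n^'m) ** (B - C) = A ** B - A ** C"
  by (simp add: matrix_matrix_mult_def vec_eq_iff sum_subtractf algebra_simps)
lemma mm_diff_r: "((A::real^'n^'m) - B) ** C = A ** C - B ** C"
  by (simp add: matrix_matrix_mult_def vec_eq_iff sum_subtractf algebra_simps)
lemma mm_scale_l: "(c *\<^sub>R (A::real^'n^'m)) ** B = c *\<^sub>R (A ** B)"
  by (simp add: matrix_matrix_mult_def vec_eq_iff sum_distrib_left algebra_simps)
lemma mm_scale_r: "(A::real^'n^'m) ** (c *\<^sub>R B) = c *\<^sub>R (A ** B)"
  by (simp add: matrix_matrix_mult_def vec_eq_iff sum_distrib_left algebra_simps)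
lemma mm_neg_l: "(- (A::real^'n^'m)) ** B = - (A ** B)"
  by (simp add: matrix_matrix_mult_def vec_eq_iff sum_negf)
lemma mm_neg_r: "(A::real^'n^'m) ** (- B) = - (A ** B)"
  by (simp add: matrix_matrix_mult_def vec_eq_iff sum_negf)
lemma trace_scale: "trace (c *\<^sub>R (A::real^'n^'n)) = c * trace A"
  by (simp add: trace_def sum_distrib_left)
lemma trace_neg: "trace (- (A::real^'n^'n)) = - trace A"
  by (simp add: trace_def sum_negf)
lemma transpose_add: "transpose ((A::real^'n^'m) + B) = transpose A + transpose B"
  by (simp add: transpose_def vec_eq_iff)
lemma transpose_diff: "transpose ((A::real^'n^'m) - B) = transpose A - transpose B"
  by (simp add: transpose_def vec_eq_iff)
lemma transpose_neg: "transpose (- (A::real^'n^'m)) = - transpose A"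
  by (simp add: transpose_def vec_eq_iff)
lemma transpose_zero: "transpose (0::real^'n^'m) = 0"
  by (simp add: transpose_def vec_eq_iff)

lemma symmD: "X \<in> symm \<Longrightarrow> X $ j $ i = X $ i $ j"
proof -
  assume "X \<in> symm"
  then have "transpose X = X" by (simp add: symm_def)
  then have "transpose X $ i $ j = X $ i $ j" by simp
  then show ?thesis by (simp add: transpose_def)
qed
lemma symmI: "(\<And>i j. X $ j $ i = X $ i $ j) \<Longrightarrow> X \<in> symm"
  unfolding symm_def transpose_def by (simp add: vec_eq_iff)
lemma symm_transpose: "X \<in> symm \<Longrightarrow> transpose X = X"
  by (simp add: symm_def)

lemma symm_add: "A \<in> symm \<Longrightarrow> B \<in> symm \<Longrightarrow> A + B \<in> symm"
  by (simp add: symm_def transpose_add)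
lemma symm_diff: "A \<in> symm \<Longrightarrow> B \<in> symm \<Longrightarrow> A - B \<in> symm"
  by (simp add: symm_def transpose_diff)
lemma symm_neg: "A \<in> symm \<Longrightarrow> - A \<in> symm"
  by (simp add: symm_def transpose_neg)
lemma symm_scale: "A \<in> symm \<Longrightarrow> c *\<^sub>R A \<in> symm"
  by (simp add: symm_def transpose_scalar)
lemma symm_zero: "0 \<in> symm"
  by (simp add: symm_def transpose_zero)
lemma symm_sum: "finite I \<Longrightarrow> (\<And>i. i \<in> I \<Longrightarrow> f i \<in> symm) \<Longrightarrow> sum f I \<in> symm"
  by (induction I rule: finite_induct) (auto simp: symm_zero symm_add)

lemma closed_symm: "closed (symm :: (real^'n^'n) set)"
proof -
  have eq: "(symm :: (real^'n^'n) set) = (\<Inter>i. \<Inter>j. {X::real^'n^'n. X $ i $ j = X $ j $ i})"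
    by (auto intro: symmI dest: symmD)
  have "closed (\<Inter>i. \<Inter>j. {X::real^'n^'n. X $ i $ j = X $ j $ i})"
    by (intro closed_INT ballI closed_Collect_eq continuous_intros)
  then show ?thesis using eq by simp
qed

lemma inner_mat: "inner (X::real^'n^'n) Y = (\<Sum>i\<in>UNIV. \<Sum>j\<in>UNIV. X$i$j * Y$i$j)"
  by (simp add: inner_vec_def)

lemma trace_mm: "trace ((X::real^'n^'n) ** Y) = (\<Sum>i\<in>UNIV. \<Sum>j\<in>UNIV. X$i$j * Y$j$i)"
  by (simp add: trace_def matrix_matrix_mult_def)

lemma inner_trace: "Y \<in> symm \<Longrightarrow> inner (X::real^'n^'n) Y = trace (X ** Y)"
  by (simp add: inner_mat trace_mm symmD)

lemma sinner_inner: "Y \<in> symm \<Longrightarrow> sinner (X::real^'n^'n) Y = inner X Y"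
  by (simp add: inner_trace sinner_def)

lemma trace_self_eq0: "X \<in> symm \<Longrightarrow> trace ((X::real^'n^'n) ** X) = 0 \<Longrightarrow> X = 0"
  by (metis inner_trace inner_eq_zero_iff)

lemma quad_sym: "X \<in> symm \<Longrightarrow> v \<bullet> ((X::real^'n^'n) *v u) = u \<bullet> (X *v v)"
  by (metis dot_lmul_matrix inner_commute symm_transpose transpose_matrix_vector)

lemma quad_expand: "X \<in> symm \<Longrightarrow> (u + s *\<^sub>R v) \<bullet> ((X::real^'n^'n) *v (u + s *\<^sub>R v))
   = u \<bullet> (X *v u) + 2 * s * (u \<bullet> (X *v v)) + s\<^sup>2 * (v \<bullet> (X *v v))"
  using quad_sym[of X v u]
  by (simp add: matrix_vector_right_distrib matrix_vector_mult_scaleR inner_add_left inner_add_right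
      power2_eq_square algebra_simps)

lemma disc_le:
  fixes a b c :: real
  assumes c: "0 \<le> c" and h: "\<And>s. 0 \<le> a + 2 * s * b + s\<^sup>2 * c"
  shows "b\<^sup>2 \<le> a * c"
proof (cases "c = 0")
  case True
  show ?thesis
  proof (cases "b = 0")
    case True then show ?thesis using h[of 0] c by simp
  next
    case False
    have "0 \<le> a + 2 * (-(a+1)/(2*b)) * b" using h[of "-(a+1)/(2*b)"] \<open>c = 0\<close> by simp
    also have "\<dots> = -1" using False by (simp add: field_simps)
    finally show ?thesis by simp
  qed
next
  case False
  then have cp: "c > 0" using c by simp
  have "0 \<le> a + 2 * (-b/c) * b + (-b/c)\<^sup>2 * c" by (rule h)
  also have "\<dots> = (a*c - b\<^sup>2)/c" using cp by (simp add: field_simps power2_eq_square)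
  finally show ?thesis using cp by (simp add: divide_nonneg_pos le_divide_eq)
qed

lemma psd_symm: "X \<in> psd_cone \<Longrightarrow> X \<in> symm" by (simp add: psd_cone_def)
lemma psd_quad: "X \<in> psd_cone \<Longrightarrow> 0 \<le> v \<bullet> (X *v v)" by (simp add: psd_cone_def)
lemma nsd_symm: "X \<in> nsd_cone \<Longrightarrow> X \<in> symm" by (simp add: nsd_cone_def)
lemma nsd_quad: "X \<in> nsd_cone \<Longrightarrow> v \<bullet> (X *v v) \<le> 0" by (simp add: nsd_cone_def)

lemma mv_neg: "(- (A::real^'n^'m)) *v v = - (A *v v)"
  by (simp add: matrix_vector_mult_def vec_eq_iff sum_negf)

lemma nsd_iff_neg_psd: "X \<in> nsd_cone \<longleftrightarrow> - X \<in> psd_cone"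
  by (auto simp: nsd_cone_def psd_cone_def symm_neg mv_neg
      dest: symm_neg[of "-X"])

lemma psd_cs: assumes "X \<in> psd_cone"
  shows "(u \<bullet> (X *v v))\<^sup>2 \<le> (u \<bullet> (X *v u)) * (v \<bullet> (X *v v))"
proof (rule disc_le)
  show "0 \<le> v \<bullet> (X *v v)" using assms by (rule psd_quad)
  fix s
  show "0 \<le> u \<bullet> (X *v u) + 2 * s * (u \<bullet> (X *v v)) + s\<^sup>2 * (v \<bullet> (X *v v))"
    using quad_expand[OF psd_symm[OF assms], of u s v] psd_quad[OF assms, of "u + s *\<^sub>R v"] by simp
qed

lemma psd_null: assumes "X \<in> psd_cone" "v \<bullet> (X *v v) = 0" shows "X *v v = 0"
proof -
  have "((X *v v) \<bullet> (X *v v))\<^sup>2 \<le> 0"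
    using psd_cs[OF assms(1), of "X *v v" v] assms(2) by simp
  then show ?thesis by simp
qed

definition outer :: "real^'n \<Rightarrow> real^'n^'n" where
  "outer w = (\<chi> i j. w$i * w$j)"

lemma outer_mv: "outer w *v v = (w \<bullet> v) *\<^sub>R w"
  by (simp add: outer_def matrix_vector_mult_def vec_eq_iff inner_vec_def sum_distrib_left algebra_simps)

lemma outer_symm: "outer w \<in> symm"
  by (rule symmI) (simp add: outer_def)

lemma outer_zero: "outer 0 = 0"
  by (simp add: outer_def vec_eq_iff)

lemma outer_scale: "outer (c *\<^sub>R w) = (c*c) *\<^sub>R outer w"
  by (simp add: outer_def vec_eq_iff)

lemma trace_outer: "trace (outer w ** Y) = w \<bullet> (Y *v w)"
  by (simp add: trace_mm outer_def inner_vec_def matrix_vector_mult_def sum_distrib_left algebra_simps)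
     (subst sum.swap, simp add: algebra_simps)

lemma mm_outer_null: "Y *v w = 0 \<Longrightarrow> (Y::real^'n^'n) ** outer w = 0"
  by (simp add: matrix_matrix_mult_def outer_def vec_eq_iff matrix_vector_mult_def
      sum_distrib_right[symmetric] mult.assoc[symmetric])

lemma mv_scale_l: "(c *\<^sub>R (A::real^'n^'m)) *v v = c *\<^sub>R (A *v v)"
  by (simp add: matrix_vector_mult_def vec_eq_iff sum_distrib_left algebra_simps)

lemma mm_sum_l: "finite I \<Longrightarrow> (sum f I) ** (Y::real^'n^'n) = (\<Sum>k\<in>I. f k ** Y)"
  by (induction I rule: finite_induct) (auto simp: mm_add_r)

lemma trace_sum: "finite I \<Longrightarrow> trace (sum f I :: real^'n^'n) = (\<Sum>k\<in>I. trace (f k))"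
  by (induction I rule: finite_induct) (auto simp: trace_add trace_0[simplified])

lemma mm_sum_r: "finite I \<Longrightarrow> (Y::real^'n^'n) ** (sum f I) = (\<Sum>k\<in>I. Y ** f k)"
  by (induction I rule: finite_induct) (auto simp: matrix_add_ldistrib)

lemma psd_decomp_aux:
  fixes I :: "'n::finite set"
  assumes "finite I"
  shows "\<forall>X::real^'n^'n. X \<in> psd_cone \<longrightarrow> (\<forall>i j. i \<notin> I \<longrightarrow> X$i$j = 0)
           \<longrightarrow> (\<exists>w. X = (\<Sum>k\<in>I. outer (w k)))"
  using assms
proof (induction I rule: finite_induct)
  case empty
  then show ?case by (auto simp: vec_eq_iff)
next
  case (insert a I)
  show ?case
  proof (intro allI impI)
    fix X :: "real^'n^'n"
    assume X: "X \<in> psd_cone" and rows: "\<forall>i j. i \<notin> insert a I \<longrightarrow> X$i$j = 0"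
    have Xs: "X \<in> symm" using X by (rule psd_symm)
    have qa: "(axis a 1) \<bullet> (X *v axis a 1) = X$a$a"
      by (simp add: matrix_vector_mult_basis inner_axis' column_def)
    have caa: "0 \<le> X$a$a" using psd_quad[OF X, of "axis a 1"] qa by simp
    show "\<exists>w. X = (\<Sum>k\<in>insert a I. outer (w k))"
    proof (cases "X$a$a = 0")
      case True
      have "X *v axis a 1 = 0" using psd_null[OF X] qa True by simp
      then have col: "X$i$a = 0" for i
        by (simp add: matrix_vector_mult_basis column_def vec_eq_iff)
      have rows': "\<forall>i j. i \<notin> I \<longrightarrow> X$i$j = 0"
      proof (intro allI impI)
        fix i j assume "i \<notin> I"
        show "X$i$j = 0"
        proof (cases "i = a")
          case True then show ?thesis using col[of j] symmD[OF Xs, of a j] by simp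
        next
          case False then show ?thesis using rows \<open>i \<notin> I\<close> by simp
        qed
      qed
      obtain w where w: "X = (\<Sum>k\<in>I. outer (w k))" using insert.IH X rows' by blast
      let ?w = "w(a := 0)"
      have "(\<Sum>k\<in>insert a I. outer (?w k)) = outer (?w a) + (\<Sum>k\<in>I. outer (?w k))"
        using insert.hyps by simp
      also have "(\<Sum>k\<in>I. outer (?w k)) = (\<Sum>k\<in>I. outer (w k))"
        using insert.hyps by (intro sum.cong) auto
      finally have "(\<Sum>k\<in>insert a I. outer (?w k)) = X" using w by (simp add: outer_zero)
      then have "X = (\<Sum>k\<in>insert a I. outer (?w k))" by (rule sym)
      then show ?thesis by (rule exI[where x="?w"])
    next
      case False
      define c where "c = X$a$a"
      have cp: "c > 0" using False caa c_def by simp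
      define p where "p = X *v axis a 1"
      have pi: "p$i = X$i$a" for i by (simp add: p_def matrix_vector_mult_basis column_def)
      define X' where "X' = X - (1/c) *\<^sub>R outer p"
      have X's: "X' \<in> symm" unfolding X'_def by (intro symm_diff symm_scale outer_symm Xs)
      have "0 \<le> v \<bullet> (X' *v v)" for v
      proof -
        have "v \<bullet> (X' *v v) = v \<bullet> (X *v v) - (1/c) * (p \<bullet> v)\<^sup>2"
          by (simp add: X'_def matrix_vector_mult_diff_rdistrib outer_mv inner_diff_right mv_scale_l
              power2_eq_square inner_commute)
        moreover have "(p \<bullet> v)\<^sup>2 \<le> (v \<bullet> (X *v v)) * c"
          using psd_cs[OF X, of v "axis a 1"] qa
          by (simp add: p_def c_def inner_commute)
        ultimately have "0 \<le> c * (v \<bullet> (X' *v v))" using cp by (simp add: field_simps)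
        then show ?thesis using cp by (simp add: zero_le_mult_iff)
      qed
      then have X'p: "X' \<in> psd_cone" using X's by (simp add: psd_cone_def)
      have rows': "\<forall>i j. i \<notin> I \<longrightarrow> X'$i$j = 0"
      proof (intro allI impI)
        fix i j assume "i \<notin> I"
        show "X'$i$j = 0"
        proof (cases "i = a")
          case True
          then show ?thesis using cp symmD[OF Xs, of a j]
            by (simp add: X'_def outer_def pi c_def)
        next
          case False
          then have "X$i$j = 0" "X$i$a = 0" using rows \<open>i \<notin> I\<close> by auto
          then show ?thesis by (simp add: X'_def outer_def pi)
        qed
      qed
      obtain w where w: "X' = (\<Sum>k\<in>I. outer (w k))" using insert.IH X'p rows' by blast
      let ?w = "w(a := (1 / sqrt c) *\<^sub>R p)"
      have oa: "outer (?w a) = (1/c) *\<^sub>R outer p"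
        using cp by (simp add: outer_scale real_sqrt_mult[symmetric])
      have "(\<Sum>k\<in>insert a I. outer (?w k)) = outer (?w a) + (\<Sum>k\<in>I. outer (?w k))"
        using insert.hyps by simp
      also have "(\<Sum>k\<in>I. outer (?w k)) = (\<Sum>k\<in>I. outer (w k))"
        using insert.hyps by (intro sum.cong) auto
      finally have "(\<Sum>k\<in>insert a I. outer (?w k)) = (1/c) *\<^sub>R outer p + X'"
        using oa w by simp
      also have "\<dots> = X" by (simp add: X'_def)
      finally have "X = (\<Sum>k\<in>insert a I. outer (?w k))" by (rule sym)
      then show ?thesis by (rule exI[where x="?w"])
    qed
  qed
qed

lemma psd_decomp:
  assumes "(X::real^'n^'n) \<in> psd_cone"
  obtains w :: "'n \<Rightarrow> real^'n" where "X = (\<Sum>k\<in>(UNIV::'n set). outer (w k))"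
proof -
  have "\<forall>X::real^'n^'n. X \<in> psd_cone \<longrightarrow> (\<forall>i j. i \<notin> (UNIV::'n set) \<longrightarrow> X$i$j = 0)
           \<longrightarrow> (\<exists>w. X = (\<Sum>k\<in>(UNIV::'n set). outer (w k)))"
    by (rule psd_decomp_aux) simp
  then have "\<exists>w. X = (\<Sum>k\<in>(UNIV::'n set). outer (w k))" using assms by simp
  then show ?thesis using that by blast
qed

lemma trace_psd_nonneg:
  assumes X: "(X::real^'n^'n) \<in> psd_cone" and Y: "Y \<in> psd_cone"
  shows "0 \<le> trace (X ** Y)"
proof -
  obtain w where w: "X = (\<Sum>k\<in>(UNIV::'n set). outer (w k))" using psd_decomp[OF X] by blast
  have "trace (X ** Y) = (\<Sum>k\<in>UNIV. (w k) \<bullet> (Y *v w k))"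
    by (simp add: w mm_sum_l trace_sum trace_outer)
  also have "\<dots> \<ge> 0" by (intro sum_nonneg psd_quad[OF Y])
  finally show ?thesis .
qed

lemma trace_psd_zero:
  assumes X: "(X::real^'n^'n) \<in> psd_cone" and Y: "Y \<in> psd_cone" and t: "trace (X ** Y) = 0"
  shows "Y ** X = 0" "X ** Y = 0"
proof -
  obtain w where w: "X = (\<Sum>k\<in>(UNIV::'n set). outer (w k))" using psd_decomp[OF X] by blast
  have "trace (X ** Y) = (\<Sum>k\<in>UNIV. (w k) \<bullet> (Y *v w k))"
    by (simp add: w mm_sum_l trace_sum trace_outer)
  then have "\<forall>k\<in>UNIV. (w k) \<bullet> (Y *v w k) = 0"
    using t by (subst sum_nonneg_eq_0_iff[symmetric]) (auto intro: psd_quad[OF Y])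
  then have "Y *v w k = 0" for k using psd_null[OF Y] by auto
  then show YX: "Y ** X = 0" by (simp add: w mm_sum_r mm_outer_null)
  have "X ** Y = transpose (transpose (X ** Y))" by simp
  also have "\<dots> = transpose (transpose Y ** transpose X)" by (simp add: matrix_transpose_mul)
  also have "\<dots> = 0" using YX psd_symm[OF X] psd_symm[OF Y]
    by (simp add: symm_transpose transpose_zero)
  finally show "X ** Y = 0" .
qed

lemma quad_sum: "v \<bullet> ((X::real^'n^'n) *v v) = (\<Sum>i\<in>UNIV. \<Sum>j\<in>UNIV. v$i * X$i$j * v$j)"
  by (simp add: inner_vec_def matrix_vector_mult_def sum_distrib_left mult.assoc)

lemma mv_add_l: "((A::real^'n^'m) + B) *v v = A *v v + B *v v"
  by (simp add: matrix_vector_mult_add_rdistrib)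

lemma psd_add: "A \<in> psd_cone \<Longrightarrow> B \<in> psd_cone \<Longrightarrow> A + B \<in> psd_cone"
  by (auto simp: psd_cone_def symm_add mv_add_l inner_add_right intro: add_nonneg_nonneg)

lemma psd_scale: "A \<in> psd_cone \<Longrightarrow> 0 \<le> c \<Longrightarrow> c *\<^sub>R A \<in> psd_cone"
  by (auto simp: psd_cone_def symm_scale mv_scale_l)

lemma psd_zero: "0 \<in> psd_cone"
  by (simp add: psd_cone_def symm_zero)

lemma nsd_zero: "0 \<in> nsd_cone"
  by (simp add: nsd_cone_def symm_zero)

lemma nsd_add: "A \<in> nsd_cone \<Longrightarrow> B \<in> nsd_cone \<Longrightarrow> A + B \<in> nsd_cone"
  using psd_add[of "-A" "-B"] by (simp add: nsd_iff_neg_psd add.commute)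

lemma nsd_scale: "A \<in> nsd_cone \<Longrightarrow> 0 \<le> c \<Longrightarrow> c *\<^sub>R A \<in> nsd_cone"
  using psd_scale[of "-A" c] by (simp add: nsd_iff_neg_psd)

lemma convex_psd: "convex (psd_cone :: (real^'n^'n) set)"
  unfolding convex_def by (auto intro!: psd_add psd_scale)

lemma convex_nsd: "convex (nsd_cone :: (real^'n^'n) set)"
  unfolding convex_def by (auto intro!: nsd_add nsd_scale)

lemma closed_psd: "closed (psd_cone :: (real^'n^'n) set)"
proof -
  have eq: "(psd_cone :: (real^'n^'n) set) = symm \<inter> (\<Inter>v. {X. 0 \<le> (\<Sum>i\<in>UNIV. \<Sum>j\<in>UNIV. v$i * X$i$j * v$j)})"
    by (auto simp: psd_cone_def quad_sum[symmetric])
  have c: "closed (\<Inter>v. {X::real^'n^'n. 0 \<le> (\<Sum>i\<in>UNIV. \<Sum>j\<in>UNIV. v$i * X$i$j * v$j)})"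
    by (intro closed_INT ballI closed_Collect_le continuous_intros)
  show ?thesis unfolding eq by (rule closed_Int[OF closed_symm c])
qed

lemma closed_nsd: "closed (nsd_cone :: (real^'n^'n) set)"
proof -
  have eq: "(nsd_cone :: (real^'n^'n) set) = symm \<inter> (\<Inter>v. {X. (\<Sum>i\<in>UNIV. \<Sum>j\<in>UNIV. v$i * X$i$j * v$j) \<le> 0})"
    by (auto simp: nsd_cone_def quad_sum[symmetric])
  have c: "closed (\<Inter>v. {X::real^'n^'n. (\<Sum>i\<in>UNIV. \<Sum>j\<in>UNIV. v$i * X$i$j * v$j) \<le> 0})"
    by (intro closed_INT ballI closed_Collect_le continuous_intros)
  show ?thesis unfolding eq by (rule closed_Int[OF closed_symm c])
qed

lemma trace_psd_nsd:
  assumes "X \<in> psd_cone" "Y \<in> nsd_cone" shows "trace ((X::real^'n^'n) ** Y) \<le> 0"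
  using trace_psd_nonneg[OF assms(1), of "-Y"] assms(2)
  by (simp add: nsd_iff_neg_psd mm_neg_r trace_neg)

lemma dot_closest:
  fixes a x z :: "'a::real_inner"
  assumes "(a - x) \<bullet> (z - x) \<le> 0"
  shows "dist a x \<le> dist a z"
proof -
  have e: "a - z = (a - x) - (z - x)" by simp
  have "(dist a z)\<^sup>2 = (a-x) \<bullet> (a-x) - 2*((a-x) \<bullet> (z-x)) + (z-x) \<bullet> (z-x)"
    unfolding dist_norm power2_norm_eq_inner e
    by (simp add: inner_diff_left inner_diff_right inner_commute)
  also have "\<dots> \<ge> (dist a x)\<^sup>2" using assms inner_ge_zero[of "z-x"]
    unfolding dist_norm power2_norm_eq_inner by linarith
  finally show ?thesis by (simp add: power2_le_iff_abs_le)
qed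

lemma inner_outer: "(X::real^'n^'n) \<bullet> outer v = v \<bullet> (X *v v)"
  by (simp add: inner_mat quad_sum outer_def mult_ac)

lemma outer_psd: "outer v \<in> psd_cone"
  by (simp add: psd_cone_def outer_symm outer_mv inner_commute)

lemma proj_char:
  fixes M P N :: "real^'n^'n"
  assumes M: "M = P + N" and P: "P \<in> psd_cone" and N: "N \<in> nsd_cone" and t: "trace (P ** N) = 0"
  shows "proj_plus M = P" "proj_minus M = N"
proof -
  have Ps: "P \<in> symm" using P by (rule psd_symm)
  have Ns: "N \<in> symm" using N by (rule nsd_symm)
  have NP: "N \<bullet> P = 0"
  proof -
    have "N \<bullet> P = trace (N ** P)" using Ps by (rule inner_trace)
    also have "\<dots> = trace (P ** N)" by (rule trace_mul_sym)
    finally show ?thesis using t by simp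
  qed
  have PN: "P \<bullet> N = 0" using NP by (simp only: inner_commute)
  have "\<forall>z\<in>psd_cone. dist M P \<le> dist M z"
  proof
    fix z :: "real^'n^'n" assume z: "z \<in> psd_cone"
    have "(M - P) \<bullet> (z - P) = N \<bullet> z - N \<bullet> P" using M by (simp add: inner_diff_right)
    moreover have "N \<bullet> z = trace (N ** z)" using psd_symm[OF z] by (rule inner_trace)
    moreover have "trace (N ** z) = trace (z ** N)" by (rule trace_mul_sym)
    moreover have "trace (z ** N) \<le> 0" by (rule trace_psd_nsd[OF z N])
    ultimately have "(M - P) \<bullet> (z - P) \<le> 0" using NP by simp
    then show "dist M P \<le> dist M z" by (rule dot_closest)
  qed
  then have "P = closest_point psd_cone M"
    by (rule closest_point_unique[OF convex_psd closed_psd P])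
  then show "proj_plus M = P" by (simp add: proj_plus_def)
  have "\<forall>z\<in>nsd_cone. dist M N \<le> dist M z"
  proof
    fix z :: "real^'n^'n" assume z: "z \<in> nsd_cone"
    have "(M - N) \<bullet> (z - N) = P \<bullet> z - P \<bullet> N" using M by (simp add: inner_diff_right)
    moreover have "P \<bullet> z = trace (P ** z)" using nsd_symm[OF z] by (rule inner_trace)
    moreover have "trace (P ** z) \<le> 0" by (rule trace_psd_nsd[OF P z])
    ultimately have "(M - N) \<bullet> (z - N) \<le> 0" using PN by simp
    then show "dist M N \<le> dist M z" by (rule dot_closest)
  qed
  then have "N = closest_point nsd_cone M"
    by (rule closest_point_unique[OF convex_nsd closed_nsd N])
  then show "proj_minus M = N" by (simp add: proj_minus_def)
qed

lemma proj_plus_psd: "proj_plus (M::real^'n^'n) \<in> psd_cone"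
  unfolding proj_plus_def
  by (rule closest_point_in_set[OF closed_psd]) (use psd_zero in blast)

lemma proj_minus_nsd: "proj_minus (M::real^'n^'n) \<in> nsd_cone"
  unfolding proj_minus_def
  by (rule closest_point_in_set[OF closed_nsd]) (use nsd_zero in blast)

lemma moreau:
  fixes M :: "real^'n^'n"
  assumes M: "M \<in> symm"
  shows "proj_plus M + proj_minus M = M" "trace (proj_plus M ** proj_minus M) = 0"
proof -
  define P where "P = proj_plus M"
  have P: "P \<in> psd_cone" by (simp add: P_def proj_plus_psd)
  have dot: "(M - P) \<bullet> (z - P) \<le> 0" if "z \<in> psd_cone" for z
    unfolding P_def proj_plus_def by (rule closest_point_dot[OF convex_psd closed_psd that])
  have "(M - P) \<bullet> (0 - P) \<le> 0" by (rule dot[OF psd_zero])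
  moreover have "(M - P) \<bullet> (2 *\<^sub>R P - P) \<le> 0" by (rule dot[OF psd_scale[OF P]]) simp
  ultimately have MP: "(M - P) \<bullet> P = 0"
    by (simp add: inner_diff_right inner_minus_right scaleR_2 inner_add_right)
  have N: "M - P \<in> nsd_cone"
  proof -
    have "v \<bullet> ((M - P) *v v) \<le> 0" for v
    proof -
      have "(M - P) \<bullet> (outer v + P - P) \<le> 0" by (rule dot[OF psd_add[OF outer_psd P]])
      then show ?thesis by (simp add: inner_outer)
    qed
    then show ?thesis using M P by (simp add: nsd_cone_def symm_diff psd_symm)
  qed
  have t: "trace (P ** (M - P)) = 0"
    using MP N by (simp add: inner_trace nsd_symm inner_commute)
  have "proj_minus M = M - P" using proj_char(2)[of M P "M - P"] P N t by simp
  then show "proj_plus M + proj_minus M = M" "trace (proj_plus M ** proj_minus M) = 0"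
    using t by (simp_all add: P_def)
qed

lemma moreau_prod:
  fixes M :: "real^'n^'n"
  assumes M: "M \<in> symm"
  shows "proj_plus M ** proj_minus M = 0" "proj_minus M ** proj_plus M = 0"
proof -
  have "trace (proj_plus M ** (- proj_minus M)) = 0"
    using moreau(2)[OF M] by (simp add: mm_neg_r trace_neg)
  moreover have "- proj_minus M \<in> psd_cone" using proj_minus_nsd nsd_iff_neg_psd by blast
  ultimately have "proj_plus M ** (- proj_minus M) = 0" "(- proj_minus M) ** proj_plus M = 0"
    using trace_psd_zero[OF proj_plus_psd] by blast+
  then show "proj_plus M ** proj_minus M = 0" "proj_minus M ** proj_plus M = 0"
    by (simp_all add: mm_neg_r mm_neg_l)
qed

lemma proj_minus_eq: "M \<in> symm \<Longrightarrow> proj_minus M = M - proj_plus M"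
  using moreau(1)[of M] by (simp add: algebra_simps)

lemma proj_lip: "norm (proj_plus (X::real^'n^'n) - proj_plus Y) \<le> norm (X - Y)"
  using closest_point_lipschitz[OF convex_psd closed_psd, of X Y] psd_zero
  by (auto simp: proj_plus_def dist_norm)

lemma projm_lip: "norm (proj_minus (X::real^'n^'n) - proj_minus Y) \<le> norm (X - Y)"
  using closest_point_lipschitz[OF convex_nsd closed_nsd, of X Y] nsd_zero
  by (auto simp: proj_minus_def dist_norm)

lemma tendsto_mm:
  fixes f g :: "'a \<Rightarrow> real^'n^'n"
  assumes "(f \<longlongrightarrow> A) F" "(g \<longlongrightarrow> B) F"
  shows "((\<lambda>x. f x ** g x) \<longlongrightarrow> A ** B) F"
proof (rule vec_tendstoI, rule vec_tendstoI)
  fix i j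
  show "((\<lambda>x. (f x ** g x) $ i $ j) \<longlongrightarrow> (A ** B) $ i $ j) F"
    unfolding matrix_matrix_mult_def
    by (simp, intro tendsto_sum tendsto_mult tendsto_vec_nth[OF tendsto_vec_nth[OF assms(1)]]
        tendsto_vec_nth[OF tendsto_vec_nth[OF assms(2)]])
qed

lemma symm_mm_transpose: "A \<in> symm \<Longrightarrow> B \<in> symm \<Longrightarrow> (B::real^'n^'n) ** A = transpose (A ** B)"
  by (simp add: matrix_transpose_mul symm_transpose)

lemma mm_zero_transpose: "A \<in> symm \<Longrightarrow> B \<in> symm \<Longrightarrow> (A::real^'n^'n) ** B = 0 \<Longrightarrow> B ** A = 0"
proof -
  assume a: "A \<in> symm" "B \<in> symm" "A ** B = 0"
  have "B ** A = transpose (A ** B)" by (rule symm_mm_transpose[OF a(1,2)])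
  then show ?thesis using a(3) by (simp add: transpose_zero)
qed

lemma mv_symm_dot: "A \<in> symm \<Longrightarrow> ((A::real^'n^'n) *v x) \<bullet> y = x \<bullet> (A *v y)"
  using quad_sym[of A x y] by (simp add: inner_commute)

lemma trace_tt: "trace (transpose (A::real^'n^'n) ** A) = A \<bullet> A"
proof -
  have "trace (transpose A ** A) = (\<Sum>i\<in>UNIV. \<Sum>j\<in>UNIV. A$j$i * A$j$i)"
    by (simp add: trace_mm transpose_def)
  also have "\<dots> = (\<Sum>j\<in>UNIV. \<Sum>i\<in>UNIV. A$j$i * A$j$i)" by (rule sum.swap)
  finally show ?thesis by (simp add: inner_mat)
qed

lemma tt_zero: "transpose (A::real^'n^'n) ** A = 0 \<Longrightarrow> A = 0"
  using trace_tt[of A] by (simp add: trace_0[simplified])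

lemma mm_eqI: "(\<And>v. (A::real^'n^'n) *v v = B *v v) \<Longrightarrow> A = B"
  using matrix_eq by blast

lemma mm_mv: "((A::real^'n^'n) ** B) *v v = A *v (B *v v)"
  by (simp add: matrix_vector_mul_assoc)

lemma symm_mm3: "Q \<in> symm \<Longrightarrow> D \<in> symm \<Longrightarrow> (Q::real^'n^'n) ** D ** Q \<in> symm"
  unfolding symm_def by (simp add: matrix_transpose_mul matrix_mul_assoc)

lemma sq_psd: "E \<in> symm \<Longrightarrow> (E::real^'n^'n) ** E \<in> psd_cone"
proof -
  assume E: "E \<in> symm"
  have "transpose (E ** E) = E ** E" using E by (simp add: matrix_transpose_mul symm_transpose)
  moreover have "0 \<le> v \<bullet> ((E ** E) *v v)" for v
  proof -
    have "v \<bullet> ((E ** E) *v v) = (E *v v) \<bullet> (E *v v)"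
      using mv_symm_dot[OF E, of v "E *v v"] by (simp add: mm_mv)
    then show ?thesis by simp
  qed
  ultimately show ?thesis by (simp add: psd_cone_def symm_def)
qed

lemma mv_sum_l: "finite I \<Longrightarrow> (sum f I) *v (v::real^'n) = (\<Sum>k\<in>I. f k *v v)"
  by (induction I rule: finite_induct) (auto simp: mv_add_l)

lemma exists_Q:
  fixes P N :: "real^'n^'n"
  obtains Q where "Q \<in> symm" "\<And>v. P *v (Q *v v) = 0" "\<And>v. N *v (Q *v v) = 0"
    "\<And>u. P *v u = 0 \<Longrightarrow> N *v u = 0 \<Longrightarrow> Q *v u = u"
proof -
  define K where "K = {u. P *v u = 0 \<and> N *v u = 0}"
  have sK: "subspace K"
    by (auto simp: K_def subspace_def matrix_vector_right_distrib matrix_vector_mult_scaleR)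
  obtain B where B: "B \<subseteq> K" "pairwise orthogonal B" "\<And>x. x \<in> B \<Longrightarrow> norm x = 1"
    "independent B" "span B = K"
    using orthonormal_basis_subspace[OF sK] by metis
  have fB: "finite B" using B(4) by (rule finiteI_independent)
  define Q where "Q = (\<Sum>b\<in>B. outer b)"
  have Qv: "Q *v v = (\<Sum>b\<in>B. (b \<bullet> v) *\<^sub>R b)" for v
    by (simp add: Q_def mv_sum_l[OF fB] outer_mv)
  have QK: "Q *v v \<in> K" for v
  proof -
    have "(\<Sum>b\<in>B. (b \<bullet> v) *\<^sub>R b) \<in> span B"
      by (intro span_sum span_scale span_base) 
    then show ?thesis using B(5) Qv by simp
  qed
  have Qs: "Q \<in> symm" unfolding Q_def by (intro symm_sum fB outer_symm)
  have Qid: "Q *v u = u" if u: "u \<in> K" for u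
  proof -
    define w where "w = Q *v u - u"
    have wK: "w \<in> K" unfolding w_def using QK u sK by (simp add: subspace_diff)
    have "orthogonal w y" if y: "y \<in> B" for y
    proof -
      have "y \<bullet> (Q *v u) = (\<Sum>b\<in>B. (b \<bullet> u) * (y \<bullet> b))"
        by (simp add: Qv inner_sum_right)
      also have "\<dots> = (y \<bullet> u) * (y \<bullet> y) + (\<Sum>b\<in>B - {y}. (b \<bullet> u) * (y \<bullet> b))"
        using fB y by (simp add: sum.remove)
      also have "(\<Sum>b\<in>B - {y}. (b \<bullet> u) * (y \<bullet> b)) = 0"
        using B(2) y by (intro sum.neutral) (auto simp: pairwise_def orthogonal_def)
      also have "y \<bullet> y = 1" using B(3)[OF y] by (simp add: norm_eq_1)
      finally have "y \<bullet> (Q *v u) = y \<bullet> u" by simp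
      then show ?thesis by (simp add: w_def orthogonal_def inner_diff_right inner_commute)
    qed
    then have "orthogonal w w" using orthogonal_to_span[of w B w] wK B(5) by simp
    then have "w = 0" by (simp add: orthogonal_def)
    then show ?thesis by (simp add: w_def)
  qed
  show ?thesis
    by (rule that[OF Qs]) (use QK Qid in \<open>auto simp: K_def\<close>)
qed

lemma kill_lemma:
  fixes P N Q M :: "real^'n^'n"
  assumes Ns: "N \<in> symm" and PN: "P ** N = 0" and QN: "Q ** N = 0" and MN: "M ** N = 0"
    and QP': "\<And>v. P *v (Q *v v) = 0" and QN': "\<And>v. N *v (Q *v v) = 0"
    and Qid: "\<And>u. P *v u = 0 \<Longrightarrow> N *v u = 0 \<Longrightarrow> Q *v u = u"
    and Px: "P *v x = 0"
  shows "M *v (x - Q *v x) = 0"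
proof -
  define y where "y = x - Q *v x"
  have QQ: "Q *v (Q *v x) = Q *v x" by (rule Qid[OF QP' QN'])
  have Py: "P *v y = 0" using Px QP'[of x] by (simp add: y_def matrix_vector_mult_diff_distrib)
  have Qy: "Q *v y = 0" using QQ by (simp add: y_def matrix_vector_mult_diff_distrib)
  define S where "S = range (\<lambda>z. N *v z)"
  obtain y1 r where y1: "y1 \<in> span S" and r: "\<And>w. w \<in> span S \<Longrightarrow> orthogonal r w" and yd: "y = y1 + r"
    using orthogonal_subspace_decomp_exists[of S y] by metis
  define T where "T = {y. P *v y = 0 \<and> Q *v y = 0 \<and> M *v y = 0}"
  have sT: "subspace T"
    by (auto simp: T_def subspace_def matrix_vector_right_distrib matrix_vector_mult_scaleR)
  have ST: "S \<subseteq> T"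
  proof
    fix w assume "w \<in> S"
    then obtain z where z: "w = N *v z" by (auto simp: S_def)
    show "w \<in> T" using PN QN MN by (simp add: T_def z mm_mv[symmetric])
  qed
  have spT: "span S \<subseteq> T" by (rule span_minimal[OF ST sT])
  have "N *v (N *v r) \<in> span S" by (rule span_base) (simp add: S_def)
  then have "orthogonal r (N *v (N *v r))" by (rule r)
  then have "(N *v r) \<bullet> (N *v r) = 0"
    using mv_symm_dot[OF Ns, of r "N *v r"] by (simp add: orthogonal_def)
  then have Nr: "N *v r = 0" by simp
  have "y1 \<in> T" using spT y1 by blast
  then have y1T: "P *v y1 = 0" "Q *v y1 = 0" "M *v y1 = 0" by (auto simp: T_def)
  have "P *v r = 0" using Py y1T(1) yd by (simp add: matrix_vector_right_distrib)
  then have "Q *v r = r" using Nr by (rule Qid)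
  then have "r = 0" using Qy y1T(2) yd by (simp add: matrix_vector_right_distrib)
  then show ?thesis using y1T(3) yd by (simp add: y_def)
qed

definition ddcond :: "real^'n^'n \<Rightarrow> real^'n^'n \<Rightarrow> real^'n^'n \<Rightarrow> real^'n^'n \<Rightarrow> real^'n^'n \<Rightarrow> bool" where
  "ddcond P N Q H D \<longleftrightarrow> D \<in> symm \<and> P ** (H - D) + D ** N = 0
     \<and> (\<forall>u. P *v u = 0 \<longrightarrow> N *v u = 0 \<longrightarrow> 0 \<le> u \<bullet> (D *v u) \<and> u \<bullet> ((H - D) *v u) \<le> 0)
     \<and> Q ** (D ** (H - D)) ** Q = 0"

lemma ddcond_facts:
  fixes P N Q H D :: "real^'n^'n"
  assumes P: "P \<in> psd_cone" and N: "N \<in> nsd_cone" and PN: "P ** N = 0" and H: "H \<in> symm"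
    and Qs: "Q \<in> symm" and QP': "\<And>v. P *v (Q *v v) = 0" and QN': "\<And>v. N *v (Q *v v) = 0"
    and Qid: "\<And>u. P *v u = 0 \<Longrightarrow> N *v u = 0 \<Longrightarrow> Q *v u = u"
    and c: "ddcond P N Q H D"
  shows "Q ** D ** Q \<in> psd_cone" "Q ** (H - D) ** Q \<in> nsd_cone"
    "(Q ** D ** Q) ** (Q ** (H - D) ** Q) = 0"
proof -
  have Ps: "P \<in> symm" using P by (rule psd_symm)
  have Ns: "N \<in> symm" using N by (rule nsd_symm)
  have Ds: "D \<in> symm" and ii: "P ** (H - D) + D ** N = 0"
    and iv: "\<And>u. P *v u = 0 \<Longrightarrow> N *v u = 0 \<Longrightarrow> 0 \<le> u \<bullet> (D *v u) \<and> u \<bullet> ((H - D) *v u) \<le> 0"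
    and v: "Q ** (D ** (H - D)) ** Q = 0"
    using c by (auto simp: ddcond_def)
  define G where "G = H - D"
  have Gs: "G \<in> symm" using H Ds by (simp add: G_def symm_diff)
  have PQ: "P ** Q = 0" by (rule mm_eqI) (simp add: mm_mv QP')
  have NQ: "N ** Q = 0" by (rule mm_eqI) (simp add: mm_mv QN')
  have QN: "Q ** N = 0" by (rule mm_zero_transpose[OF Ns Qs NQ])
  have QQ: "Q *v (Q *v w) = Q *v w" for w by (rule Qid[OF QP' QN'])
  show psdQ: "Q ** D ** Q \<in> psd_cone"
  proof -
    have "0 \<le> v \<bullet> ((Q ** D ** Q) *v v)" for v
    proof -
      have "v \<bullet> ((Q ** D ** Q) *v v) = (Q *v v) \<bullet> (D *v (Q *v v))"
        using mv_symm_dot[OF Qs, of v "D *v (Q *v v)"] by (simp add: mm_mv)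
      also have "\<dots> \<ge> 0" using iv[OF QP' QN'] by blast
      finally show ?thesis .
    qed
    then show ?thesis using symm_mm3[OF Qs Ds] by (simp add: psd_cone_def)
  qed
  show "Q ** (H - D) ** Q \<in> nsd_cone"
  proof -
    have "v \<bullet> ((Q ** (H - D) ** Q) *v v) \<le> 0" for v
    proof -
      have "v \<bullet> ((Q ** (H - D) ** Q) *v v) = (Q *v v) \<bullet> ((H - D) *v (Q *v v))"
        using mv_symm_dot[OF Qs, of v "(H - D) *v (Q *v v)"] by (simp add: mm_mv)
      also have "\<dots> \<le> 0" using iv[OF QP' QN'] by blast
      finally show ?thesis .
    qed
    then show ?thesis using symm_mm3[OF Qs Gs] by (simp add: nsd_cone_def G_def)
  qed
  have iii: "G ** P + N ** D = 0"
  proof -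
    have "transpose (P ** G + D ** N) = 0" using ii by (simp add: G_def transpose_zero)
    then show ?thesis
      by (simp add: transpose_add matrix_transpose_mul symm_transpose[OF Ps] symm_transpose[OF Ns]
          symm_transpose[OF Ds] symm_transpose[OF Gs])
  qed
  have PGQ: "P ** G ** Q = 0"
  proof -
    have "(P ** G + D ** N) ** Q = 0" using ii by (simp add: G_def)
    then show ?thesis by (simp add: mm_add_r matrix_mul_assoc[symmetric] NQ)
  qed
  have QDN: "(Q ** D) ** N = 0"
  proof -
    have "(G ** P + N ** D) ** Q = 0" using iii by simp
    then have NDQ: "N ** (D ** Q) = 0" by (simp add: mm_add_r matrix_mul_assoc[symmetric] PQ)
    have "(Q ** D) ** N = transpose (N ** (D ** Q))"
      by (simp add: matrix_transpose_mul symm_transpose[OF Qs] symm_transpose[OF Ns]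
          symm_transpose[OF Ds] matrix_mul_assoc)
    then show ?thesis using NDQ by (simp add: transpose_zero)
  qed
  show "(Q ** D ** Q) ** (Q ** (H - D) ** Q) = 0"
  proof (rule mm_eqI)
    fix w
    define x where "x = G *v (Q *v w)"
    have Px: "P *v x = 0" using PGQ by (simp add: x_def mm_mv[symmetric] matrix_mul_assoc)
    have k: "(Q ** D) *v (x - Q *v x) = 0"
      by (rule kill_lemma[OF Ns PN QN QDN QP' QN' Qid Px])
    have "((Q ** D ** Q) ** (Q ** (H - D) ** Q)) *v w = Q *v (D *v (Q *v (Q *v x)))"
      by (simp add: mm_mv x_def G_def)
    also have "\<dots> = Q *v (D *v (Q *v x))" by (simp add: QQ)
    also have "\<dots> = Q *v (D *v x)" using k
      by (simp add: mm_mv matrix_vector_mult_diff_distrib)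
    also have "\<dots> = (Q ** (D ** (H - D)) ** Q) *v w" by (simp add: mm_mv x_def G_def)
    also have "\<dots> = 0 *v w" using v by simp
    finally show "((Q ** D ** Q) ** (Q ** (H - D) ** Q)) *v w = 0 *v w" .
  qed
qed

lemma ddcond_unique:
  fixes P N Q H D1 D2 :: "real^'n^'n"
  assumes P: "P \<in> psd_cone" and N: "N \<in> nsd_cone" and PN: "P ** N = 0" and H: "H \<in> symm"
    and Qs: "Q \<in> symm" and QP': "\<And>v. P *v (Q *v v) = 0" and QN': "\<And>v. N *v (Q *v v) = 0"
    and Qid: "\<And>u. P *v u = 0 \<Longrightarrow> N *v u = 0 \<Longrightarrow> Q *v u = u"
    and c1: "ddcond P N Q H D1" and c2: "ddcond P N Q H D2"
  shows "D1 = D2"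
proof -
  note f1 = ddcond_facts[OF P N PN H Qs QP' QN' Qid c1]
  note f2 = ddcond_facts[OF P N PN H Qs QP' QN' Qid c2]
  have Ps: "P \<in> symm" using P by (rule psd_symm)
  have Ns: "N \<in> symm" using N by (rule nsd_symm)
  have D1s: "D1 \<in> symm" and ii1: "P ** (H - D1) + D1 ** N = 0" using c1 by (auto simp: ddcond_def)
  have D2s: "D2 \<in> symm" and ii2: "P ** (H - D2) + D2 ** N = 0" using c2 by (auto simp: ddcond_def)
  define E where "E = D1 - D2"
  have Es: "E \<in> symm" using D1s D2s by (simp add: E_def symm_diff)
  have PE: "P ** E = E ** N"
  proof -
    have "P ** (H - D1) + D1 ** N - (P ** (H - D2) + D2 ** N) = 0" using ii1 ii2 by simp
    then show ?thesis by (simp add: E_def mm_diff_l mm_diff_r algebra_simps)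
  qed
  have EE: "E ** E \<in> psd_cone" using Es by (rule sq_psd)
  have tr: "trace ((E ** E) ** P) = trace ((E ** E) ** N)"
  proof -
    have "trace ((E ** E) ** P) = trace (E ** (E ** P))" by (simp add: matrix_mul_assoc)
    also have "\<dots> = trace ((E ** P) ** E)" by (rule trace_mul_sym)
    also have "\<dots> = trace (E ** (P ** E))" by (simp add: matrix_mul_assoc)
    also have "\<dots> = trace ((E ** E) ** N)" by (simp add: PE matrix_mul_assoc)
    finally show ?thesis .
  qed
  have t1: "0 \<le> trace ((E ** E) ** P)" by (rule trace_psd_nonneg[OF EE P])
  have t2: "trace ((E ** E) ** N) \<le> 0" by (rule trace_psd_nsd[OF EE N])
  have z1: "trace ((E ** E) ** P) = 0" using tr t1 t2 by simp
  have PEE: "P ** (E ** E) = 0" by (rule trace_psd_zero(1)[OF EE P z1])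
  have mN: "- N \<in> psd_cone" using N nsd_iff_neg_psd by blast
  have z2: "trace ((E ** E) ** (- N)) = 0" using tr z1 by (simp add: mm_neg_r trace_neg)
  have NEE: "(- N) ** (E ** E) = 0" by (rule trace_psd_zero(1)[OF EE mN z2])
  have EP: "E ** P = 0"
  proof (rule tt_zero)
    have "transpose (E ** P) ** (E ** P) = P ** (E ** E) ** P"
      by (simp add: matrix_transpose_mul symm_transpose[OF Es] symm_transpose[OF Ps] matrix_mul_assoc)
    then show "transpose (E ** P) ** (E ** P) = 0" using PEE by simp
  qed
  have EN: "E ** N = 0"
  proof (rule tt_zero)
    have "transpose (E ** N) ** (E ** N) = - ((- N) ** (E ** E) ** N)"
      by (simp add: matrix_transpose_mul symm_transpose[OF Es] symm_transpose[OF Ns] matrix_mul_assoc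
          mm_neg_l)
    then show "transpose (E ** N) ** (E ** N) = 0" using NEE by simp
  qed
  have PE0: "P ** E = 0" by (rule mm_zero_transpose[OF Es Ps EP])
  have NE0: "N ** E = 0" by (rule mm_zero_transpose[OF Es Ns EN])
  have QE: "Q ** E = E"
  proof (rule mm_eqI)
    fix v
    have "P *v (E *v v) = 0" "N *v (E *v v) = 0" using PE0 NE0 by (simp_all add: mm_mv[symmetric])
    then show "(Q ** E) *v v = E *v v" by (simp add: mm_mv Qid)
  qed
  have EQ: "E ** Q = E"
  proof -
    have "E ** Q = transpose (Q ** E)" by (rule symm_mm_transpose[OF Qs Es])
    also have "\<dots> = E" using QE symm_transpose[OF Es] by simp
    finally show ?thesis .
  qed
  define a1 where "a1 = Q ** D1 ** Q"
  define a2 where "a2 = Q ** D2 ** Q"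
  define b1 where "b1 = Q ** (H - D1) ** Q"
  define b2 where "b2 = Q ** (H - D2) ** Q"
  have QEQ: "Q ** E ** Q = E" using QE EQ by simp
  have ea: "E = a1 - a2"
    using QEQ by (simp add: a1_def a2_def E_def mm_diff_l mm_diff_r)
  have eb: "E = b2 - b1"
  proof -
    have "b2 - b1 = Q ** (D1 - D2) ** Q"
      by (simp add: b1_def b2_def mm_diff_l mm_diff_r)
    then show ?thesis using QEQ by (simp add: E_def)
  qed
  have "trace (E ** E) = trace ((a1 - a2) ** (b2 - b1))" using ea eb by metis
  also have "\<dots> = trace (a1 ** b2) - trace (a1 ** b1) - trace (a2 ** b2) + trace (a2 ** b1)"
    by (simp add: mm_diff_l mm_diff_r trace_sub)
  also have "\<dots> = trace (a1 ** b2) + trace (a2 ** b1)"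
    using f1(3) f2(3) unfolding a1_def a2_def b1_def b2_def by (simp add: trace_0[simplified])
  also have "\<dots> \<le> 0"
  proof -
    have A1: "a1 \<in> psd_cone" "a2 \<in> psd_cone" "b1 \<in> nsd_cone" "b2 \<in> nsd_cone"
      unfolding a1_def a2_def b1_def b2_def using f1 f2 by blast+
    show ?thesis using trace_psd_nsd[OF A1(1) A1(4)] trace_psd_nsd[OF A1(2) A1(3)] by linarith
  qed
  finally have "trace (E ** E) \<le> 0" .
  then have "E \<bullet> E \<le> 0" using inner_trace[OF Es, of E] by simp
  then have "E \<bullet> E = 0" using inner_ge_zero[of E] by linarith
  then have "E = 0" by simp
  then show ?thesis by (simp add: E_def)
qed

definition dq :: "(real^'n^'n \<Rightarrow> real^'n^'n) \<Rightarrow> real^'n^'n \<Rightarrow> real^'n^'n \<Rightarrow> real \<Rightarrow> real^'n^'n" where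
  "dq F Z H t = (F (Z + t *\<^sub>R H) - F Z) /\<^sub>R t"

lemma dir_deriv_dq: "dir_deriv F Z H = Lim (at_right 0) (dq F Z H)"
  by (simp add: dir_deriv_def dq_def[abs_def])

lemma mm_expand: "((A::real^'n^'n) + t *\<^sub>R B) ** (C + t *\<^sub>R D)
   = A ** C + t *\<^sub>R (A ** D + B ** C + t *\<^sub>R (B ** D))"
  by (simp add: matrix_add_ldistrib mm_add_r mm_scale_l mm_scale_r algebra_simps)

lemma step_facts:
  fixes Z H :: "real^'n^'n" and t :: real
  assumes Zs: "Z \<in> symm" and Hs: "H \<in> symm" and t: "t > 0"
  defines "D \<equiv> dq proj_plus Z H t"
  shows "D \<in> symm" "norm D \<le> norm H"
    "proj_plus Z ** (H - D) + D ** proj_minus Z + t *\<^sub>R (D ** (H - D)) = 0"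
    "\<And>u. proj_plus Z *v u = 0 \<Longrightarrow> proj_minus Z *v u = 0 \<Longrightarrow> 0 \<le> u \<bullet> (D *v u) \<and> u \<bullet> ((H - D) *v u) \<le> 0"
proof -
  define P where "P = proj_plus Z"
  define N where "N = proj_minus Z"
  define Zt where "Zt = Z + t *\<^sub>R H"
  have Zts: "Zt \<in> symm" using Zs Hs by (simp add: Zt_def symm_add symm_scale)
  have Pt: "proj_plus Zt = P + t *\<^sub>R D" using t by (simp add: D_def dq_def P_def Zt_def)
  have ZPN: "Z = P + N" using moreau(1)[OF Zs] by (simp add: P_def N_def)
  have Nt: "proj_minus Zt = N + t *\<^sub>R (H - D)"
  proof -
    have "proj_minus Zt = Zt - proj_plus Zt" by (rule proj_minus_eq[OF Zts])
    also have "\<dots> = N + t *\<^sub>R (H - D)" using Pt ZPN by (simp add: Zt_def algebra_simps)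
    finally show ?thesis .
  qed
  have Ps: "P \<in> symm" by (simp add: P_def psd_symm proj_plus_psd)
  have Pts: "proj_plus Zt \<in> symm" by (simp add: psd_symm proj_plus_psd)
  have "D = (1/t) *\<^sub>R (proj_plus Zt - P)" using t by (simp add: Pt)
  then show "D \<in> symm" using Ps Pts by (simp add: symm_scale symm_diff)
  have "norm (proj_plus Zt - P) \<le> norm (Zt - Z)" unfolding P_def by (rule proj_lip)
  moreover have "proj_plus Zt - P = t *\<^sub>R D" using Pt by simp
  moreover have "Zt - Z = t *\<^sub>R H" by (simp add: Zt_def)
  ultimately have "norm (t *\<^sub>R D) \<le> norm (t *\<^sub>R H)" by (simp only:)
  then show "norm D \<le> norm H" using t by simp
  have PN: "P ** N = 0" using moreau_prod(1)[OF Zs] by (simp add: P_def N_def)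
  have "proj_plus Zt ** proj_minus Zt = 0" by (rule moreau_prod(1)[OF Zts])
  then have "t *\<^sub>R (P ** (H - D) + D ** N + t *\<^sub>R (D ** (H - D))) = 0"
    by (simp add: Pt Nt mm_expand PN)
  then show "proj_plus Z ** (H - D) + D ** proj_minus Z + t *\<^sub>R (D ** (H - D)) = 0"
    using t by (simp add: P_def N_def)
  fix u assume Pu: "proj_plus Z *v u = 0" and Nu: "proj_minus Z *v u = 0"
  have "0 \<le> u \<bullet> (proj_plus Zt *v u)" by (rule psd_quad[OF proj_plus_psd])
  also have "u \<bullet> (proj_plus Zt *v u) = t * (u \<bullet> (D *v u))"
    using Pu by (simp add: Pt mv_add_l mv_scale_l P_def inner_add_right)
  finally have 1: "0 \<le> u \<bullet> (D *v u)" using t by (simp add: zero_le_mult_iff)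
  have "u \<bullet> (proj_minus Zt *v u) \<le> 0" by (rule nsd_quad[OF proj_minus_nsd])
  also have "u \<bullet> (proj_minus Zt *v u) = t * (u \<bullet> ((H - D) *v u))"
    using Nu by (simp add: Nt mv_add_l mv_scale_l N_def inner_add_right)
  finally have 2: "u \<bullet> ((H - D) *v u) \<le> 0" using t by (simp add: mult_le_0_iff)
  show "0 \<le> u \<bullet> (D *v u) \<and> u \<bullet> ((H - D) *v u) \<le> 0" using 1 2 by simp
qed

lemma step_Q:
  fixes P N Q G D :: "real^'n^'n" and t :: real
  assumes e: "P ** G + D ** N + t *\<^sub>R (D ** G) = 0" and t: "t > 0"
    and QP: "Q ** P = 0" and NQ: "N ** Q = 0"
  shows "Q ** (D ** G) ** Q = 0"
proof -
  have "t *\<^sub>R (D ** G) = (P ** G + D ** N + t *\<^sub>R (D ** G)) - (P ** G + D ** N)" by simp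
  also have "\<dots> = - (P ** G + D ** N)" using e by simp
  finally have "t *\<^sub>R (D ** G) = - (P ** G + D ** N)" .
  then have "Q ** (t *\<^sub>R (D ** G)) ** Q = Q ** (- (P ** G + D ** N)) ** Q"
    by (simp only:)
  also have "\<dots> = - (Q ** (P ** G + D ** N) ** Q)"
    by (simp only: mm_neg_l mm_neg_r)
  also have "\<dots> = 0"
    by (simp add: matrix_add_ldistrib mm_add_r matrix_mul_assoc QP)
       (simp add: matrix_mul_assoc[symmetric] NQ)
  finally show ?thesis using t by (simp add: mm_scale_l mm_scale_r)
qed

lemma quad_tendsto:
  fixes f :: "nat \<Rightarrow> real^'n^'n"
  assumes "f \<longlonglongrightarrow> D"
  shows "(\<lambda>n. u \<bullet> (f n *v u)) \<longlonglongrightarrow> u \<bullet> (D *v u)"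
proof -
  have "(\<lambda>n. f n \<bullet> outer u) \<longlonglongrightarrow> D \<bullet> outer u"
    by (intro tendsto_inner assms tendsto_const)
  then show ?thesis by (simp add: inner_outer)
qed

lemma cluster_cond:
  fixes Z H Q :: "real^'n^'n" and s :: "nat \<Rightarrow> real"
  assumes Zs: "Z \<in> symm" and Hs: "H \<in> symm"
    and Qs: "Q \<in> symm" and QP': "\<And>v. proj_plus Z *v (Q *v v) = 0" and QN': "\<And>v. proj_minus Z *v (Q *v v) = 0"
    and spos: "\<And>n. s n > 0" and s0: "s \<longlonglongrightarrow> 0"
    and lim: "(\<lambda>n. dq proj_plus Z H (s n)) \<longlonglongrightarrow> D"
  shows "ddcond (proj_plus Z) (proj_minus Z) Q H D"
proof -
  define P where "P = proj_plus Z"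
  define N where "N = proj_minus Z"
  define f where "f = (\<lambda>n. dq proj_plus Z H (s n))"
  note sf = step_facts[OF Zs Hs spos]
  have f: "f \<longlonglongrightarrow> D" using lim by (simp add: f_def)
  have Ds: "D \<in> symm"
    by (rule closed_sequentially[OF closed_symm _ f]) (simp add: f_def sf(1))
  have "(\<lambda>n. P ** (H - f n) + f n ** N + s n *\<^sub>R (f n ** (H - f n)))
          \<longlonglongrightarrow> P ** (H - D) + D ** N + 0 *\<^sub>R (D ** (H - D))"
    by (intro tendsto_add tendsto_scaleR tendsto_mm tendsto_diff tendsto_const f s0)
  moreover have "(\<lambda>n. P ** (H - f n) + f n ** N + s n *\<^sub>R (f n ** (H - f n))) = (\<lambda>n. 0)"
    using sf(3) by (simp add: f_def P_def N_def)
  ultimately have ii: "P ** (H - D) + D ** N = 0"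
    using LIMSEQ_unique[OF _ tendsto_const] by fastforce
  have iv: "0 \<le> u \<bullet> (D *v u) \<and> u \<bullet> ((H - D) *v u) \<le> 0" if "P *v u = 0" "N *v u = 0" for u
  proof
    have "\<forall>n. 0 \<le> u \<bullet> (f n *v u)" using sf(4) that by (simp add: f_def P_def N_def)
    then show "0 \<le> u \<bullet> (D *v u)"
      using LIMSEQ_le_const[OF quad_tendsto[OF f, of u]] by blast
    have "\<forall>n. u \<bullet> ((H - f n) *v u) \<le> 0" using sf(4) that by (simp add: f_def P_def N_def)
    moreover have "(\<lambda>n. H - f n) \<longlonglongrightarrow> H - D" by (intro tendsto_diff tendsto_const f)
    ultimately show "u \<bullet> ((H - D) *v u) \<le> 0"
      using LIMSEQ_le_const2[OF quad_tendsto, of "\<lambda>n. H - f n" "H - D" u] by blast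
  qed
  have PQ: "P ** Q = 0" by (rule mm_eqI) (simp add: mm_mv QP' P_def)
  have NQ: "N ** Q = 0" by (rule mm_eqI) (simp add: mm_mv QN' N_def)
  have Ps: "P \<in> symm" by (simp add: P_def psd_symm proj_plus_psd)
  have QP: "Q ** P = 0" by (rule mm_zero_transpose[OF Ps Qs PQ])
  have "(\<lambda>n. Q ** (f n ** (H - f n)) ** Q) \<longlonglongrightarrow> Q ** (D ** (H - D)) ** Q"
    by (intro tendsto_mm tendsto_diff tendsto_const f)
  moreover have "(\<lambda>n. Q ** (f n ** (H - f n)) ** Q) = (\<lambda>n. 0)"
  proof
    fix n
    show "Q ** (f n ** (H - f n)) ** Q = 0"
      by (rule step_Q[OF _ spos QP NQ]) (use sf(3) in \<open>simp add: f_def P_def N_def\<close>)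
  qed
  ultimately have v: "Q ** (D ** (H - D)) ** Q = 0"
    using LIMSEQ_unique[OF _ tendsto_const] by fastforce
  show ?thesis using Ds ii iv v by (simp add: ddcond_def P_def N_def)
qed

lemma dd_exists:
  fixes Z H :: "real^'n^'n"
  assumes Zs: "Z \<in> symm" and Hs: "H \<in> symm"
  shows "\<exists>D. (dq proj_plus Z H \<longlongrightarrow> D) (at_right 0)"
proof -
  obtain Q where Qs: "Q \<in> symm" and QP': "\<And>v. proj_plus Z *v (Q *v v) = 0"
    and QN': "\<And>v. proj_minus Z *v (Q *v v) = 0"
    and Qid: "\<And>u. proj_plus Z *v u = 0 \<Longrightarrow> proj_minus Z *v u = 0 \<Longrightarrow> Q *v u = u"
    using exists_Q[of "proj_plus Z" "proj_minus Z"] by metis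
  have uniq: "D1 = D2" if "ddcond (proj_plus Z) (proj_minus Z) Q H D1"
    "ddcond (proj_plus Z) (proj_minus Z) Q H D2" for D1 D2
    by (rule ddcond_unique[OF proj_plus_psd proj_minus_nsd moreau_prod(1)[OF Zs] Hs Qs QP' QN' Qid that])
  have clus: "ddcond (proj_plus Z) (proj_minus Z) Q H D"
    if "\<And>n. s n > 0" "s \<longlonglongrightarrow> 0" "(\<lambda>n. dq proj_plus Z H (s n)) \<longlonglongrightarrow> D" for s D
    by (rule cluster_cond[OF Zs Hs Qs QP' QN' that])
  have bnd: "bounded (range (\<lambda>n. dq proj_plus Z H (s n)))" if "\<And>n. s n > 0" for s
    by (rule boundedI[of _ "norm H"]) (use step_facts(2)[OF Zs Hs that] in auto)
  define s0 where "s0 = (\<lambda>n. inverse (real (Suc n)))"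
  have s0p: "s0 n > 0" for n by (simp add: s0_def)
  obtain D0 r where r: "strict_mono r" and D0: "((\<lambda>n. dq proj_plus Z H (s0 n)) \<circ> r) \<longlonglongrightarrow> D0"
    using bounded_imp_convergent_subsequence[OF bnd[of s0, OF s0p]] by blast
  have s0r: "(s0 \<circ> r) \<longlonglongrightarrow> 0"
    unfolding s0_def by (rule LIMSEQ_subseq_LIMSEQ[OF LIMSEQ_inverse_real_of_nat r])
  have c0: "ddcond (proj_plus Z) (proj_minus Z) Q H D0"
    by (rule clus[of "s0 \<circ> r"]) (use s0p s0r D0 in \<open>auto simp: o_def\<close>)
  have "(dq proj_plus Z H \<longlongrightarrow> D0) (at_right 0)"
  proof (rule ccontr)
    assume "\<not> ?thesis"
    then obtain e where e: "e > 0" and ne: "\<not> eventually (\<lambda>t. dist (dq proj_plus Z H t) D0 < e) (at_right 0)"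
      unfolding tendsto_iff by blast
    have "\<forall>n. \<exists>y. 0 < y \<and> y < s0 n \<and> \<not> dist (dq proj_plus Z H y) D0 < e"
    proof
      fix n
      show "\<exists>y. 0 < y \<and> y < s0 n \<and> \<not> dist (dq proj_plus Z H y) D0 < e"
        using ne s0p[of n] unfolding eventually_at_right_field by force
    qed
    then obtain s where s: "\<And>n. 0 < s n" "\<And>n. s n < s0 n"
      "\<And>n. \<not> dist (dq proj_plus Z H (s n)) D0 < e"
      by metis
    have s_0: "s \<longlonglongrightarrow> 0"
    proof (rule tendsto_sandwich[of "\<lambda>n. 0" s sequentially s0])
      show "\<forall>\<^sub>F n in sequentially. 0 \<le> s n" using s(1) by (simp add: less_imp_le)
      show "\<forall>\<^sub>F n in sequentially. s n \<le> s0 n" using s(2) by (simp add: less_imp_le)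
      show "(\<lambda>n. 0) \<longlonglongrightarrow> (0::real)" by simp
      show "s0 \<longlonglongrightarrow> 0" unfolding s0_def by (rule LIMSEQ_inverse_real_of_nat)
    qed
    obtain D1 r1 where r1: "strict_mono r1" and D1: "((\<lambda>n. dq proj_plus Z H (s n)) \<circ> r1) \<longlonglongrightarrow> D1"
      using bounded_imp_convergent_subsequence[OF bnd[of s, OF s(1)]] by blast
    have sr: "(s \<circ> r1) \<longlonglongrightarrow> 0" by (rule LIMSEQ_subseq_LIMSEQ[OF s_0 r1])
    have c1: "ddcond (proj_plus Z) (proj_minus Z) Q H D1"
      by (rule clus[of "s \<circ> r1"]) (use s(1) sr D1 in \<open>auto simp: o_def\<close>)
    have "D1 = D0" using uniq[OF c1 c0] .
    moreover have "e \<le> dist D1 D0"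
    proof (rule LIMSEQ_le_const)
      show "(\<lambda>n. dist (((\<lambda>n. dq proj_plus Z H (s n)) \<circ> r1) n) D0) \<longlonglongrightarrow> dist D1 D0"
        by (intro tendsto_dist D1 tendsto_const)
      show "\<exists>N. \<forall>n\<ge>N. e \<le> dist (((\<lambda>n. dq proj_plus Z H (s n)) \<circ> r1) n) D0"
        using s(3) by (auto simp: not_less)
    qed
    ultimately show False using e by simp
  qed
  then show ?thesis by blast
qed

lemma matrix_inv_right': "invertible (A::real^'n^'n) \<Longrightarrow> A ** matrix_inv A = mat 1"
  unfolding invertible_def matrix_inv_def by (rule someI2_ex) auto

lemma sinner_add_r: "sinner A (X + Y) = sinner A X + sinner A (Y::real^'n^'n)"
  by (simp add: sinner_def matrix_add_ldistrib trace_add)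
lemma sinner_diff_r: "sinner A (X - Y) = sinner A X - sinner A (Y::real^'n^'n)"
  by (simp add: sinner_def mm_diff_l trace_sub)
lemma sinner_scale_r: "sinner A (c *\<^sub>R X) = c * sinner A (X::real^'n^'n)"
  by (simp add: sinner_def mm_scale_r trace_scale)
lemma sinner_comm: "sinner A B = sinner B (A::real^'n^'n)"
  unfolding sinner_def by (rule trace_mul_sym)
lemma sinner_add_l: "sinner (X + Y) A = sinner X A + sinner Y (A::real^'n^'n)"
  by (simp add: sinner_def mm_add_r trace_add)
lemma sinner_diff_l: "sinner (X - Y) A = sinner X A - sinner Y (A::real^'n^'n)"
  by (simp add: sinner_def mm_diff_r trace_sub)
lemma sinner_scale_l: "sinner (c *\<^sub>R X) A = c * sinner X (A::real^'n^'n)"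
  by (simp add: sinner_def mm_scale_l trace_scale)

lemma Aop_add: "Aop As (X + Y) = Aop As X + Aop As Y"
  by (simp add: Aop_def vec_eq_iff sinner_add_r)
lemma Aop_diff: "Aop As (X - Y) = Aop As X - Aop As Y"
  by (simp add: Aop_def vec_eq_iff sinner_diff_r)
lemma Aop_scale: "Aop As (c *\<^sub>R X) = c *\<^sub>R Aop As X"
  by (simp add: Aop_def vec_eq_iff sinner_scale_r)

lemma Aadj_add: "Aadj As (y + z) = Aadj As y + Aadj As z"
  by (simp add: Aadj_def scaleR_add_left sum.distrib)
lemma Aadj_diff: "Aadj As (y - z) = Aadj As y - Aadj As z"
  by (simp add: Aadj_def scaleR_diff_left sum_subtractf)
lemma Aadj_scale: "Aadj As (c *\<^sub>R y) = c *\<^sub>R Aadj As y"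
  by (simp add: Aadj_def scaleR_sum_right)
lemma Aadj_zero: "Aadj As 0 = 0"
  by (simp add: Aadj_def)

lemma Aop_dot: "Aop As X \<bullet> y = sinner (Aadj As y) X"
proof -
  have "sinner (Aadj As y) X = trace (\<Sum>i\<in>UNIV. (y $ i *\<^sub>R As i) ** X)"
    unfolding Aadj_def sinner_def by (simp only: mm_sum_l[OF finite_class.finite_UNIV])
  also have "\<dots> = (\<Sum>i\<in>UNIV. y $ i * sinner (As i) X)"
    by (simp only: trace_sum[OF finite_class.finite_UNIV] mm_scale_l trace_scale sinner_def)
  also have "\<dots> = Aop As X \<bullet> y"
    unfolding Aop_def inner_vec_def by (intro sum.cong refl) simp
  finally show ?thesis by (rule sym)
qed

lemma Aop_Aadj: "Aop As (Aadj As y) = AAadj As *v y"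
proof -
  have "sinner (As i) (Aadj As y) = (\<Sum>j\<in>UNIV. sinner (As i) (As j) * y $ j)" for i
  proof -
    have "sinner (As i) (Aadj As y) = trace (\<Sum>j\<in>UNIV. As i ** (y $ j *\<^sub>R As j))"
      unfolding Aadj_def sinner_def by (simp only: mm_sum_r[OF finite_class.finite_UNIV])
    also have "\<dots> = (\<Sum>j\<in>UNIV. y $ j * sinner (As i) (As j))"
      by (simp only: trace_sum[OF finite_class.finite_UNIV] mm_scale_r trace_scale sinner_def)
    also have "\<dots> = (\<Sum>j\<in>UNIV. sinner (As i) (As j) * y $ j)"
      by (intro sum.cong refl) simp
    finally show ?thesis .
  qed
  then show ?thesis unfolding Aop_def AAadj_def matrix_vector_mult_def by (simp add: vec_eq_iff)
qed

lemma Aadj_symm: "(\<And>i. As i \<in> symm) \<Longrightarrow> Aadj As y \<in> symm"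
  unfolding Aadj_def by (intro symm_sum symm_scale) auto

lemma AAadj_invertible:
  assumes A_sym: "\<And>i. As i \<in> symm" and A1: "\<forall>w. \<exists>X\<in>symm. Aop As X = w"
  shows "invertible (AAadj As)"
proof -
  have "y = 0" if y: "AAadj As *v y = 0" for y
  proof -
    have "y \<bullet> (AAadj As *v y) = Aop As (Aadj As y) \<bullet> y"
      by (simp only: Aop_Aadj inner_commute)
    also have "\<dots> = sinner (Aadj As y) (Aadj As y)" by (rule Aop_dot)
    finally have "y \<bullet> (AAadj As *v y) = sinner (Aadj As y) (Aadj As y)" .
    then have "sinner (Aadj As y) (Aadj As y) = 0" using y by simp
    moreover have Ys: "Aadj As y \<in> symm" by (rule Aadj_symm) (rule A_sym)
    ultimately have "Aadj As y \<bullet> Aadj As y = 0" by (simp add: sinner_inner)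
    then have Ay: "Aadj As y = 0" by simp
    obtain X where "X \<in> symm" "Aop As X = y" using A1 by blast
    then have "y \<bullet> y = Aop As X \<bullet> y" by simp
    also have "\<dots> = sinner (Aadj As y) X" by (rule Aop_dot)
    also have "\<dots> = 0" using Ay by (simp add: sinner_def trace_0[simplified])
    finally show "y = 0" by simp
  qed
  then have "\<exists>B. B ** AAadj As = mat 1" by (subst matrix_left_invertible_ker) blast
  then show ?thesis by (subst invertible_left_inverse)
qed

lemma Pop_add: "Pop As (X + Y) = Pop As X + Pop As Y"
  by (simp add: Pop_def Aop_add matrix_vector_right_distrib Aadj_add)
lemma Pop_diff: "Pop As (X - Y) = Pop As X - Pop As Y"
  by (simp add: Pop_def Aop_diff matrix_vector_mult_diff_distrib Aadj_diff)
lemma Pop_scale: "Pop As (c *\<^sub>R X) = c *\<^sub>R Pop As X"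
  by (simp add: Pop_def Aop_scale matrix_vector_mult_scaleR Aadj_scale)
lemma Pop_zero: "Pop As 0 = 0"
  using Pop_scale[of As 0 0] by simp

lemma Pop_idem:
  assumes A_sym: "\<And>i. As i \<in> symm" and A1: "\<forall>w. \<exists>X\<in>symm. Aop As X = w"
  shows "Pop As (Pop As X) = Pop As X"
proof -
  have inv: "AAadj As ** matrix_inv (AAadj As) = mat 1"
    by (rule matrix_inv_right'[OF AAadj_invertible[OF A_sym A1]])
  have "Aop As (Pop As X) = Aop As X"
    by (simp add: Pop_def Aop_Aadj matrix_vector_mul_assoc inv)
  then show ?thesis by (simp add: Pop_def)
qed

lemma Pop_split:
  assumes A_sym: "\<And>i. As i \<in> symm" and A1: "\<forall>w. \<exists>X\<in>symm. Aop As X = w"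
    and h: "Pop As a + Pperp As b = 0"
  shows "Pop As a = 0" "Pperp As b = 0"
proof -
  have "Pop As (Pop As a + Pperp As b) = Pop As a"
    by (simp add: Pop_add Pperp_def Pop_diff Pop_idem[OF A_sym A1])
  then show "Pop As a = 0" using h by (simp add: Pop_zero)
  then show "Pperp As b = 0" using h by simp
qed

lemma Pperp_scale: "Pperp As (c *\<^sub>R X) = c *\<^sub>R Pperp As X"
  by (simp add: Pperp_def Pop_scale scaleR_diff_right)

lemma KKT_orth:
  assumes A_sym: "\<And>i. As i \<in> symm"
    and X: "X \<in> Xstar As b C" and S: "S \<in> Sstar As b C"
  shows "trace (X ** S) = 0"
proof -
  obtain y1 S1 where k1: "KKT As b C X y1 S1" using X by (auto simp: Xstar_def)
  obtain X2 y2 where k2: "KKT As b C X2 y2 S" using S by (auto simp: Sstar_def)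
  have X1: "X \<in> psd_cone" "Aop As X = b" "Aadj As y1 + S1 = C" "S1 \<in> psd_cone" "sinner X S1 = 0"
    using k1 by (auto simp: KKT_def)
  have X2: "X2 \<in> psd_cone" "Aop As X2 = b" "Aadj As y2 + S = C" "S \<in> psd_cone" "sinner X2 S = 0"
    using k2 by (auto simp: KKT_def)
  have "S1 - S = Aadj As (y2 - y1)" using X1(3) X2(3) by (simp add: Aadj_diff algebra_simps)
  then have "sinner (X - X2) (S1 - S) = sinner (Aadj As (y2 - y1)) (X - X2)" by (simp add: sinner_comm)
  also have "\<dots> = Aop As (X - X2) \<bullet> (y2 - y1)" by (simp add: Aop_dot)
  also have "\<dots> = 0" using X1(2) X2(2) by (simp add: Aop_diff)
  finally have "sinner (X - X2) (S1 - S) = 0" .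
  then have e: "sinner X S + sinner X2 S1 = 0"
    using X1(5) X2(5) by (simp add: sinner_diff_l sinner_diff_r)
  have "0 \<le> sinner X S" unfolding sinner_def by (rule trace_psd_nonneg[OF X1(1) X2(4)])
  moreover have "0 \<le> sinner X2 S1" unfolding sinner_def by (rule trace_psd_nonneg[OF X2(1) X1(4)])
  ultimately have "sinner X S = 0" using e by linarith
  then show ?thesis by (simp add: sinner_def)
qed

lemma Xstar_psd: "X \<in> Xstar As b C \<Longrightarrow> X \<in> psd_cone"
  by (auto simp: Xstar_def KKT_def)
lemma Sstar_psd: "S \<in> Sstar As b C \<Longrightarrow> S \<in> psd_cone"
  by (auto simp: Sstar_def KKT_def)

lemma char_pair:
  fixes X S :: "real^'n^'n"
  assumes X: "X \<in> psd_cone" and S: "S \<in> psd_cone" and t: "trace (X ** S) = 0" and tau: "0 \<le> \<tau>"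
  shows "proj_plus (X - \<tau> *\<^sub>R S) = X" "proj_minus (X - \<tau> *\<^sub>R S) = - (\<tau> *\<^sub>R S)"
proof -
  have N: "- (\<tau> *\<^sub>R S) \<in> nsd_cone" using psd_scale[OF S tau] by (simp add: nsd_iff_neg_psd)
  have tr: "trace (X ** (- (\<tau> *\<^sub>R S))) = 0" using t by (simp add: mm_neg_r mm_scale_r trace_neg trace_scale)
  have e: "X - \<tau> *\<^sub>R S = X + - (\<tau> *\<^sub>R S)" by simp
  show "proj_plus (X - \<tau> *\<^sub>R S) = X" "proj_minus (X - \<tau> *\<^sub>R S) = - (\<tau> *\<^sub>R S)"
    using proj_char[OF e X N tr] by auto
qed

lemma transfer_lim:
  fixes a b e :: "real \<Rightarrow> real^'n^'n"
  assumes b: "(b \<longlongrightarrow> B) (at_right 0)" and e: "(e \<longlongrightarrow> 0) (at_right 0)"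
    and le: "\<And>t. t > 0 \<Longrightarrow> norm (a t - b t) \<le> norm (e t)"
  shows "(a \<longlongrightarrow> B) (at_right 0)"
proof -
  have ev: "eventually (\<lambda>t. norm (a t - b t) \<le> norm (e t) * 1) (at_right 0)"
    by (rule eventually_at_rightI[of 0 1]) (auto intro: le)
  have "((\<lambda>t. a t - b t) \<longlongrightarrow> 0) (at_right 0)" by (rule tendsto_0_le[OF e ev])
  then have "((\<lambda>t. b t + (a t - b t)) \<longlongrightarrow> B + 0) (at_right 0)" by (intro tendsto_add b)
  then show ?thesis by simp
qed

lemma ev_pos: "eventually (\<lambda>t::real. t > 0) (at_right 0)"
  by (rule eventually_at_rightI[of 0 1]) auto

lemma dq_mult: "t \<noteq> 0 \<Longrightarrow> F (Z + t *\<^sub>R H) = F Z + t *\<^sub>R dq F Z H t"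
  by (simp add: dq_def)

lemma Zstar_decomp:
  assumes "Zb \<in> Zstar As b C \<sigma>"
  obtains X S where "X \<in> Xstar As b C" "S \<in> Sstar As b C" "Zb = X - \<sigma> *\<^sub>R S"
  using assms by (auto simp: Zstar_def)

lemma Psi_lip:
  fixes A B :: "real^'n^'n"
  assumes r: "r > 0"
  shows "norm ((proj_plus A + (1/r) *\<^sub>R proj_minus A) - (proj_plus B + (1/r) *\<^sub>R proj_minus B))
         \<le> (1 + 1/r) * norm (A - B)"
proof -
  have "(proj_plus A + (1/r) *\<^sub>R proj_minus A) - (proj_plus B + (1/r) *\<^sub>R proj_minus B)
        = (proj_plus A - proj_plus B) + (1/r) *\<^sub>R (proj_minus A - proj_minus B)"
    by (simp add: algebra_simps)
  also have "norm \<dots> \<le> norm (proj_plus A - proj_plus B) + norm ((1/r) *\<^sub>R (proj_minus A - proj_minus B))"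
    by (rule norm_triangle_ineq)
  also have "norm ((1/r) *\<^sub>R (proj_minus A - proj_minus B)) = (1/r) * norm (proj_minus A - proj_minus B)"
    using r by simp
  also have "norm (proj_plus A - proj_plus B) + (1/r) * norm (proj_minus A - proj_minus B)
      \<le> norm (A - B) + (1/r) * norm (A - B)"
    using proj_lip[of A B] projm_lip[of A B] r by (intro add_mono mult_left_mono) auto
  finally show ?thesis by (simp add: algebra_simps)
qed

lemma tangent_part:
  fixes As :: "'m::finite \<Rightarrow> real^'n^'n"
  assumes A_sym: "\<And>i. As i \<in> symm" and sig: "\<sigma> > 0" and sig': "\<sigma>' > 0"
    and r_def: "r = \<sigma>' / \<sigma>"
    and X0: "X0 \<in> Xstar As b C" and S0: "S0 \<in> Sstar As b C"
    and Zbd: "Zb = X0 - \<sigma> *\<^sub>R S0" and Zb'd: "Zb' = X0 - \<sigma>' *\<^sub>R S0"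
    and dp'lim: "(dq proj_plus Zb' Hb' \<longlongrightarrow> Dp) (at_right 0)"
    and dm'lim: "(dq proj_minus Zb' Hb' \<longlongrightarrow> r *\<^sub>R (Hb - Dp)) (at_right 0)"
    and tan: "Hb' \<in> tangent_cone (Zstar As b C \<sigma>') Zb'"
  shows "Hb \<in> tangent_cone (Zstar As b C \<sigma>) Zb"
proof -
  have rpos: "r > 0" using sig sig' by (simp add: r_def)
  have rs': "(1/r) * \<sigma>' = \<sigma>" using sig sig' by (simp add: r_def)
  have rs'': "\<sigma>' / r = \<sigma>" using rs' by simp
  have orth: "trace (X ** S) = 0" if "X \<in> Xstar As b C" "S \<in> Sstar As b C" for X S
    by (rule KKT_orth[of As X b C S]) (auto intro: A_sym that)
  have X0p: "X0 \<in> psd_cone" using X0 by (rule Xstar_psd)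
  have S0p: "S0 \<in> psd_cone" using S0 by (rule Sstar_psd)
  have o00: "trace (X0 ** S0) = 0" using orth[OF X0 S0] .
  have PZ': "proj_plus Zb' = X0" and NZ': "proj_minus Zb' = - (\<sigma>' *\<^sub>R S0)"
    using char_pair[OF X0p S0p o00, of \<sigma>'] sig' by (auto simp: Zb'd)
  define Psi where "Psi M = proj_plus M + (1/r) *\<^sub>R proj_minus M" for M :: "real^'n^'n"
  have PsiL: "norm (Psi A - Psi B) \<le> (1 + 1/r) * norm (A - B)" for A B
    unfolding Psi_def by (rule Psi_lip[OF rpos])
  define q where "q s = (Psi (Zb' + s *\<^sub>R Hb') - Zb) /\<^sub>R s" for s
  define dp' where "dp' = dq proj_plus Zb' Hb'"
  define dm' where "dm' = dq proj_minus Zb' Hb'"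
  have qeq: "q s = dp' s + (1/r) *\<^sub>R dm' s" if s: "s > 0" for s
  proof -
    have a: "proj_plus (Zb' + s *\<^sub>R Hb') = X0 + s *\<^sub>R dp' s"
      using dq_mult[of s proj_plus Zb' Hb'] s by (simp add: dp'_def PZ')
    have b: "proj_minus (Zb' + s *\<^sub>R Hb') = - (\<sigma>' *\<^sub>R S0) + s *\<^sub>R dm' s"
      using dq_mult[of s proj_minus Zb' Hb'] s by (simp add: dm'_def NZ')
    have c: "(1/r) *\<^sub>R (\<sigma>' *\<^sub>R S0) = \<sigma> *\<^sub>R S0" by (simp only: scaleR_scaleR rs')
    have "Psi (Zb' + s *\<^sub>R Hb') - Zb = s *\<^sub>R (dp' s + (1/r) *\<^sub>R dm' s)"
      unfolding Psi_def a b Zbd using c by (simp add: algebra_simps rs'')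
    then show ?thesis using s by (simp add: q_def)
  qed
  have qlim: "(q \<longlongrightarrow> Hb) (at_right 0)"
  proof -
    have "((\<lambda>s. dp' s + (1/r) *\<^sub>R dm' s) \<longlongrightarrow> Dp + (1/r) *\<^sub>R (r *\<^sub>R (Hb - Dp))) (at_right 0)"
      using dp'lim dm'lim unfolding dp'_def dm'_def by (intro tendsto_add tendsto_scaleR tendsto_const)
    moreover have "Dp + (1/r) *\<^sub>R (r *\<^sub>R (Hb - Dp)) = Hb" using rpos by simp
    moreover have ev: "eventually (\<lambda>s. dp' s + (1/r) *\<^sub>R dm' s = q s) (at_right 0)"
      by (rule eventually_mono[OF ev_pos]) (simp add: qeq)
    ultimately show ?thesis using tendsto_cong[OF ev] by simp
  qed
  show ?thesis unfolding tangent_cone_def closure_approachable_le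
  proof (intro allI impI)
    fix \<epsilon> :: real assume e: "\<epsilon> > 0"
    define \<delta> where "\<delta> = \<epsilon> / (1 + 1/r)"
    have Lpos: "1 + 1/r > 0" using rpos by (simp add: add_pos_pos)
    have dpos: "\<delta> > 0" unfolding \<delta>_def using e Lpos by (rule divide_pos_pos)
    obtain y where y: "y \<in> {t *\<^sub>R (k - Zb') |t k. 0 \<le> t \<and> k \<in> Zstar As b C \<sigma>'}" and yd: "dist y Hb' < \<delta>"
      using tan dpos unfolding tangent_cone_def closure_approachable by blast
    then obtain \<tau> k' where tau: "0 \<le> \<tau>" and k': "k' \<in> Zstar As b C \<sigma>'" and yeq: "y = \<tau> *\<^sub>R (k' - Zb')"
      by blast
    obtain X' S' where X': "X' \<in> Xstar As b C" and S': "S' \<in> Sstar As b C" and k'd: "k' = X' - \<sigma>' *\<^sub>R S'"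
      using k' by (rule Zstar_decomp)
    have X'p: "X' \<in> psd_cone" using X' by (rule Xstar_psd)
    have S'p: "S' \<in> psd_cone" using S' by (rule Sstar_psd)
    define c where "c = \<tau> *\<^sub>R ((X' - \<sigma> *\<^sub>R S') - Zb)"
    have cin: "c \<in> {t *\<^sub>R (k - Zb) |t k. 0 \<le> t \<and> k \<in> Zstar As b C \<sigma>}"
    proof -
      have "X' - \<sigma> *\<^sub>R S' \<in> Zstar As b C \<sigma>" using X' S' by (auto simp: Zstar_def)
      then show ?thesis using tau by (auto simp: c_def)
    qed
    have key: "Psi (Zb' + s *\<^sub>R y) = Zb + s *\<^sub>R c" if s: "0 < s" "s * \<tau> < 1" for s
    proof -
      define l where "l = s * \<tau>"
      have l0: "0 \<le> l" "0 \<le> 1 - l" using s tau by (auto simp: l_def)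
      define X'' where "X'' = (1 - l) *\<^sub>R X0 + l *\<^sub>R X'"
      define S'' where "S'' = (1 - l) *\<^sub>R S0 + l *\<^sub>R S'"
      have X''p: "X'' \<in> psd_cone" unfolding X''_def
        by (intro psd_add psd_scale X0p X'p l0)
      have S''p: "S'' \<in> psd_cone" unfolding S''_def
        by (intro psd_add psd_scale S0p S'p l0)
      have tr: "trace (X'' ** S'') = 0"
        unfolding X''_def S''_def
        by (simp add: matrix_add_ldistrib mm_add_r mm_scale_l mm_scale_r trace_add trace_scale
            orth X0 S0 X' S')
      have e1: "Zb' + s *\<^sub>R y = X'' - \<sigma>' *\<^sub>R S''"
        unfolding yeq k'd Zb'd X''_def S''_def l_def by (simp add: algebra_simps)
      have "Psi (Zb' + s *\<^sub>R y) = X'' + (1/r) *\<^sub>R (- (\<sigma>' *\<^sub>R S''))"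
        unfolding Psi_def e1 using char_pair[OF X''p S''p tr, of \<sigma>'] sig' by simp
      also have "\<dots> = X'' - \<sigma> *\<^sub>R S''" by (simp only: scaleR_minus_right scaleR_scaleR rs' diff_conv_add_uminus)
      also have "\<dots> = Zb + s *\<^sub>R c"
        unfolding X''_def S''_def c_def Zbd l_def by (simp add: algebra_simps)
      finally show ?thesis .
    qed
    have bound: "norm (q s - c) \<le> (1 + 1/r) * dist y Hb'" if s: "0 < s" "s * \<tau> < 1" for s
    proof -
      have "q s - c = (Psi (Zb' + s *\<^sub>R Hb') - Psi (Zb' + s *\<^sub>R y)) /\<^sub>R s"
        using s by (simp add: q_def key algebra_simps)
      then have "norm (q s - c) = norm (Psi (Zb' + s *\<^sub>R Hb') - Psi (Zb' + s *\<^sub>R y)) / s"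
        using s by (simp add: divide_inverse mult.commute)
      also have "\<dots> \<le> (1 + 1/r) * norm ((Zb' + s *\<^sub>R Hb') - (Zb' + s *\<^sub>R y)) / s"
        by (rule divide_right_mono[OF PsiL]) (use s in simp)
      also have "norm ((Zb' + s *\<^sub>R Hb') - (Zb' + s *\<^sub>R y)) = s * dist y Hb'"
        using s by (simp add: dist_norm norm_minus_commute scaleR_diff_right[symmetric])
      finally show ?thesis using s by simp
    qed
    have "norm (Hb - c) \<le> (1 + 1/r) * dist y Hb'"
    proof (rule tendsto_upperbound)
      show "((\<lambda>s. norm (q s - c)) \<longlongrightarrow> norm (Hb - c)) (at_right 0)"
        by (intro tendsto_norm tendsto_diff qlim tendsto_const)
      show "eventually (\<lambda>s. norm (q s - c) \<le> (1 + 1/r) * dist y Hb') (at_right 0)"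
      proof (rule eventually_at_rightI[of 0 "1 / (\<tau> + 1)"])
        fix s assume "s \<in> {0<..<1 / (\<tau> + 1)}"
        then have "0 < s" "s * (\<tau> + 1) < 1" using tau by (auto simp: field_simps)
        then have "0 < s" "s * \<tau> < 1" by (auto simp: algebra_simps)
        then show "norm (q s - c) \<le> (1 + 1/r) * dist y Hb'" by (rule bound)
      qed (use tau in simp)
      show "\<not> trivial_limit (at_right (0::real))" by simp
    qed
    also have "\<dots> \<le> (1 + 1/r) * \<delta>" using yd rpos by (intro mult_left_mono) auto
    also have "\<dots> = \<epsilon>" using Lpos by (simp add: \<delta>_def)
    finally have "dist c Hb \<le> \<epsilon>" by (simp add: dist_norm norm_minus_commute)
    then show "\<exists>y\<in>{t *\<^sub>R (k - Zb) |t k. 0 \<le> t \<and> k \<in> Zstar As b C \<sigma>}. dist y Hb \<le> \<epsilon>"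
      using cin by blast
  qed
qed

theorem lemma9p2:
  fixes As :: "'m::finite \<Rightarrow> real^'n^'n" and b :: "real^'m" and C :: "real^'n^'n"
    and \<sigma> \<sigma>' :: real and Zb Hb :: "real^'n^'n"
  assumes C_sym: "C \<in> symm"
    and A_sym: "\<And>i. As i \<in> symm"
    and A1: "\<forall>w. \<exists>X\<in>symm. Aop As X = w"
    and A2: "\<exists>X y S. KKT As b C X y S \<and> rank X + rank S = CARD('n)"
    and sig: "\<sigma> > 0" and sig': "\<sigma>' > 0"
    and Zb: "Zb \<in> Zstar As b C \<sigma>"
    and Hb: "Hb \<in> crit_cone As Zb - tangent_cone (Zstar As b C \<sigma>) Zb"
  shows "(let Xb = proj_plus Zb; Sb = - (1/\<sigma>) *\<^sub>R proj_minus Zb;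
              Zb' = Xb - \<sigma>' *\<^sub>R Sb;
              Hb' = dir_deriv proj_plus Zb Hb + (\<sigma>'/\<sigma>) *\<^sub>R dir_deriv proj_minus Zb Hb
          in Hb' \<in> crit_cone As Zb' - tangent_cone (Zstar As b C \<sigma>') Zb')"
proof -
  define r where "r = \<sigma>' / \<sigma>"
  have rpos: "r > 0" using sig sig' by (simp add: r_def)
  have rs: "r * \<sigma> = \<sigma>'" using sig by (simp add: r_def)
  have rs': "(1/r) * \<sigma>' = \<sigma>" using sig sig' by (simp add: r_def)
  obtain X0 S0 where X0: "X0 \<in> Xstar As b C" and S0: "S0 \<in> Sstar As b C" and Zbd: "Zb = X0 - \<sigma> *\<^sub>R S0"
    using Zb by (rule Zstar_decomp)
  have orth: "trace (X ** S) = 0" if "X \<in> Xstar As b C" "S \<in> Sstar As b C" for X S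
    by (rule KKT_orth[of As X b C S]) (auto intro: A_sym that)
  have X0p: "X0 \<in> psd_cone" using X0 by (rule Xstar_psd)
  have S0p: "S0 \<in> psd_cone" using S0 by (rule Sstar_psd)
  have o00: "trace (X0 ** S0) = 0" using orth[OF X0 S0] .
  have PZ: "proj_plus Zb = X0" and NZ: "proj_minus Zb = - (\<sigma> *\<^sub>R S0)"
    using char_pair[OF X0p S0p o00, of \<sigma>] sig Zbd by auto
  have Sb: "- (1/\<sigma>) *\<^sub>R proj_minus Zb = S0" using sig NZ by simp
  define Zb' where "Zb' = X0 - \<sigma>' *\<^sub>R S0"
  have PZ': "proj_plus Zb' = X0" and NZ': "proj_minus Zb' = - (\<sigma>' *\<^sub>R S0)"
    using char_pair[OF X0p S0p o00, of \<sigma>'] sig' by (auto simp: Zb'_def)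
  have Zs: "Zb \<in> symm" using X0p S0p by (simp add: Zbd symm_diff symm_scale psd_symm)
  have Hs: "Hb \<in> symm" and crit: "delta' As Zb Hb = 0"
    and ntan: "Hb \<notin> tangent_cone (Zstar As b C \<sigma>) Zb"
    using Hb by (auto simp: crit_cone_def)
  obtain Dp where Dp: "(dq proj_plus Zb Hb \<longlongrightarrow> Dp) (at_right 0)"
    using dd_exists[OF Zs Hs] by blast
  define f where "f = dq proj_plus Zb Hb"
  define g where "g = dq proj_minus Zb Hb"
  have ZtHs: "Zb + t *\<^sub>R Hb \<in> symm" for t by (intro symm_add symm_scale Zs Hs)
  have geq: "g t = Hb - f t" if t: "t > 0" for t
  proof -
    define Pt where "Pt = proj_plus (Zb + t *\<^sub>R Hb)"
    have e1: "proj_minus (Zb + t *\<^sub>R Hb) = (Zb + t *\<^sub>R Hb) - Pt"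
      unfolding Pt_def by (rule proj_minus_eq[OF ZtHs])
    have e2: "proj_minus Zb = Zb - proj_plus Zb" by (rule proj_minus_eq[OF Zs])
    have "g t = ((Zb + t *\<^sub>R Hb - Pt) - (Zb - proj_plus Zb)) /\<^sub>R t"
      by (simp only: g_def dq_def e1 e2)
    also have "(Zb + t *\<^sub>R Hb - Pt) - (Zb - proj_plus Zb) = t *\<^sub>R Hb - (Pt - proj_plus Zb)"
      by (simp add: algebra_simps)
    also have "(t *\<^sub>R Hb - (Pt - proj_plus Zb)) /\<^sub>R t = Hb - (Pt - proj_plus Zb) /\<^sub>R t"
      using t by (simp add: scaleR_diff_right)
    finally show ?thesis by (simp add: f_def dq_def Pt_def)
  qed
  have flim: "(f \<longlongrightarrow> Dp) (at_right 0)" using Dp by (simp add: f_def)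
  have glim: "(g \<longlongrightarrow> Hb - Dp) (at_right 0)"
  proof -
    have lim: "((\<lambda>t. Hb - f t) \<longlongrightarrow> Hb - Dp) (at_right 0)" by (intro tendsto_diff tendsto_const flim)
    have ev: "eventually (\<lambda>t. Hb - f t = g t) (at_right 0)"
      by (rule eventually_mono[OF ev_pos]) (simp add: geq)
    show ?thesis by (rule tendsto_cong[OF ev, THEN iffD1, OF lim])
  qed
  have DD1: "dir_deriv proj_plus Zb Hb = Dp"
    using tendsto_Lim[OF trivial_limit_at_right_real flim] by (simp add: dir_deriv_dq f_def)
  have DD2: "dir_deriv proj_minus Zb Hb = Hb - Dp"
    using tendsto_Lim[OF trivial_limit_at_right_real glim] by (simp add: dir_deriv_dq g_def)
  have Dps: "Dp \<in> symm"
  proof (rule Lim_in_closed_set[OF closed_symm _ _ flim])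
    show "eventually (\<lambda>t. f t \<in> symm) (at_right 0)"
      by (rule eventually_mono[OF ev_pos]) (simp add: f_def step_facts(1)[OF Zs Hs])
    show "at_right (0::real) \<noteq> bot" by simp
  qed
  define Hb' where "Hb' = Dp + r *\<^sub>R (Hb - Dp)"
  have Hb's: "Hb' \<in> symm" by (simp add: Hb'_def symm_add symm_scale symm_diff Dps Hs)
  define dp' where "dp' = dq proj_plus Zb' Hb'"
  define dm' where "dm' = dq proj_minus Zb' Hb'"
  define e where "e t = Hb' - (f t + r *\<^sub>R g t)" for t
  define Phi where "Phi t = proj_plus (Zb + t *\<^sub>R Hb) + r *\<^sub>R proj_minus (Zb + t *\<^sub>R Hb)" for t
  have Pt: "proj_plus (Zb + t *\<^sub>R Hb) = X0 + t *\<^sub>R f t" if "t > 0" for t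
    using dq_mult[of t proj_plus Zb Hb] that by (simp add: f_def PZ)
  have Nt: "proj_minus (Zb + t *\<^sub>R Hb) = - (\<sigma> *\<^sub>R S0) + t *\<^sub>R g t" if "t > 0" for t
    using dq_mult[of t proj_minus Zb Hb] that by (simp add: g_def NZ)
  have projPhi: "proj_plus (Phi t) = proj_plus (Zb + t *\<^sub>R Hb)"
      "proj_minus (Phi t) = r *\<^sub>R proj_minus (Zb + t *\<^sub>R Hb)" for t
  proof -
    have N: "r *\<^sub>R proj_minus (Zb + t *\<^sub>R Hb) \<in> nsd_cone"
      by (rule nsd_scale[OF proj_minus_nsd]) (use rpos in simp)
    have tr: "trace (proj_plus (Zb + t *\<^sub>R Hb) ** (r *\<^sub>R proj_minus (Zb + t *\<^sub>R Hb))) = 0"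
      using moreau(2)[OF ZtHs[of t]] by (simp add: mm_scale_r trace_scale)
    show "proj_plus (Phi t) = proj_plus (Zb + t *\<^sub>R Hb)"
      "proj_minus (Phi t) = r *\<^sub>R proj_minus (Zb + t *\<^sub>R Hb)"
      using proj_char[OF Phi_def proj_plus_psd N tr] by auto
  qed
  have PhiEq: "Phi t = Zb' + t *\<^sub>R (f t + r *\<^sub>R g t)" if "t > 0" for t
  proof -
    have "Phi t = X0 + t *\<^sub>R f t + r *\<^sub>R (- (\<sigma> *\<^sub>R S0) + t *\<^sub>R g t)"
      using that by (simp add: Phi_def Pt Nt)
    also have "\<dots> = X0 - (r * \<sigma>) *\<^sub>R S0 + t *\<^sub>R (f t + r *\<^sub>R g t)"
      by (simp add: algebra_simps)
    finally show ?thesis by (simp add: rs Zb'_def)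
  qed
  have elim: "(e \<longlongrightarrow> 0) (at_right 0)"
  proof -
    have "(e \<longlongrightarrow> Hb' - (Dp + r *\<^sub>R (Hb - Dp))) (at_right 0)"
      unfolding e_def[abs_def] by (intro tendsto_diff tendsto_add tendsto_scaleR tendsto_const flim glim)
    then show ?thesis by (simp add: Hb'_def)
  qed
  have dp'lim: "(dp' \<longlongrightarrow> Dp) (at_right 0)"
  proof (rule transfer_lim[OF flim elim])
    fix t :: real assume t: "t > 0"
    have "t *\<^sub>R (dp' t - f t) = proj_plus (Zb' + t *\<^sub>R Hb') - proj_plus (Phi t)"
      using dq_mult[of t proj_plus Zb' Hb'] t by (simp add: dp'_def projPhi Pt PZ' algebra_simps)
    moreover have "(Zb' + t *\<^sub>R Hb') - Phi t = t *\<^sub>R e t"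
      using t by (simp add: PhiEq e_def algebra_simps)
    ultimately have "norm (t *\<^sub>R (dp' t - f t)) \<le> norm (t *\<^sub>R e t)"
      using proj_lip[of "Zb' + t *\<^sub>R Hb'" "Phi t"] by simp
    then show "norm (dp' t - f t) \<le> norm (e t)" using t by simp
  qed
  have dm'lim: "(dm' \<longlongrightarrow> r *\<^sub>R (Hb - Dp)) (at_right 0)"
  proof (rule transfer_lim[OF _ elim])
    show "((\<lambda>t. r *\<^sub>R g t) \<longlongrightarrow> r *\<^sub>R (Hb - Dp)) (at_right 0)"
      by (intro tendsto_scaleR tendsto_const glim)
    fix t :: real assume t: "t > 0"
    have "t *\<^sub>R (dm' t - r *\<^sub>R g t) = proj_minus (Zb' + t *\<^sub>R Hb') - proj_minus (Phi t)"
      using dq_mult[of t proj_minus Zb' Hb'] t rs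
      by (simp add: dm'_def projPhi Nt NZ' algebra_simps)
    moreover have "(Zb' + t *\<^sub>R Hb') - Phi t = t *\<^sub>R e t"
      using t by (simp add: PhiEq e_def algebra_simps)
    ultimately have "norm (t *\<^sub>R (dm' t - r *\<^sub>R g t)) \<le> norm (t *\<^sub>R e t)"
      using projm_lip[of "Zb' + t *\<^sub>R Hb'" "Phi t"] by simp
    then show "norm (dm' t - r *\<^sub>R g t) \<le> norm (e t)" using t by simp
  qed
  have DD3: "dir_deriv proj_plus Zb' Hb' = Dp"
    using tendsto_Lim[OF trivial_limit_at_right_real dp'lim] by (simp add: dir_deriv_dq dp'_def)
  have DD4: "dir_deriv proj_minus Zb' Hb' = r *\<^sub>R (Hb - Dp)"
    using tendsto_Lim[OF trivial_limit_at_right_real dm'lim] by (simp add: dir_deriv_dq dm'_def)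
  have split: "Pop As Dp + Pperp As (Hb - Dp) = 0"
  proof -
    have h: "- Pop As Dp - Pperp As (Hb - Dp) = 0" using crit by (simp add: delta'_def DD1 DD2)
    have eq: "Pop As Dp + Pperp As (Hb - Dp) = - (- Pop As Dp - Pperp As (Hb - Dp))"
      by (simp add: algebra_simps)
    show ?thesis unfolding eq h by simp
  qed
  have s1: "Pop As Dp = 0" and s2: "Pperp As (Hb - Dp) = 0"
    using Pop_split[of As, OF A_sym A1 split] by auto
  have crit': "Hb' \<in> crit_cone As Zb'"
    using Hb's s1 s2 by (simp add: crit_cone_def delta'_def DD3 DD4 Pperp_scale)
  have ntan': "Hb' \<notin> tangent_cone (Zstar As b C \<sigma>') Zb'"
  proof
    assume tan: "Hb' \<in> tangent_cone (Zstar As b C \<sigma>') Zb'"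
    have "Hb \<in> tangent_cone (Zstar As b C \<sigma>) Zb"
      by (rule tangent_part[where As=As, OF A_sym sig sig' r_def X0 S0 Zbd Zb'_def _ _ tan])
        (use dp'lim dm'lim in \<open>simp_all add: dp'_def dm'_def\<close>)
    then show False using ntan by simp
  qed
  have eZ: "proj_plus Zb - \<sigma>' *\<^sub>R (- (1/\<sigma>) *\<^sub>R proj_minus Zb) = Zb'"
    using PZ Sb by (simp add: Zb'_def)
  have eH: "dir_deriv proj_plus Zb Hb + (\<sigma>'/\<sigma>) *\<^sub>R dir_deriv proj_minus Zb Hb = Hb'"
    by (simp add: DD1 DD2 Hb'_def r_def)
  show ?thesis unfolding Let_def eZ eH using crit' ntan' by blast
qed

end
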